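(* Fix $c\in(0,1]$. For a function $W:\mathbb{N}\to\mathbb{R}$ and an integer $n\ge 2$, say $W$ is admissible with curvature at most $c$ (relative to $n$) if $W(0)=0$, $W(x)>0$ for all $x\ge1$, $W$ is nondecreasing and concave on $\{0,1,2,\dots\}$, and $1-\frac{W(n)-W(n-1)}{W(1)}\le c$. (a) For every $n\ge 2$, consider the utility mechanism that assigns to every resource $r$ with welfare function $W_r$ the local utility function $$F_r(x)=\sum_{k=1}^n \eta_k(W_r)\,F^c_k(x),\qquad x=1,\dots,n,$$ where $\eta_1(W)=[2W(1)-W(2)]/c$, $\eta_k(W)=[2W(k)-W(k-1)-W(k+1)]/c$ for $k=2,\dots,n-1$, $\eta_n(W)=W(1)-\sum_{k=1}^{n-1}\eta_k(W)$, and $F^c_k$ is the function defined by $F^c_k(1)=1$ and, for $x\ge1$, $$F^c_k(x+1)=\max\Big\{\tfrac1k\big[xF^c_k(x)-V^c_k(x)\rho_k\big]+1,\;1-c\Big\},\qquad \rho_k=\Big(1-c\,\tfrac{k^ke^{-k}}{k!}\Big)^{-1},$$ with $V^c_k(x)=(1-c)x+c\min\{x,k\}$. Then every resource allocation game with at most $n$ players whose welfare functions are all admissible with curvature at most $c$ (relative to $n$), equipped with this mechanism, has price of anarchy at least $1-c/e$. (b) Conversely, for every utility mechanism $\mathcal{F}$, the infimum of the price of anarchy over all resource allocation games (with any finite number of players $n$) whose welfare functions are admissible with curvature at most $c$ (relative to their number of players) is at most $1-c/e$. Hence the best achievable price of anarchy over this class is exactly $1-c/e$.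
   Context: A resource allocation game consists of a finite player set $N=\{1,\dots,n\}$, a finite resource set $\mathcal{R}$, action sets $\mathcal{A}_i\subseteq 2^{\mathcal{R}}$ for each $i\in N$, welfare functions $W_r:\mathbb{N}\to\mathbb{R}$ and local utility functions $F_r:\mathbb{N}\to\mathbb{R}$ for $r\in\mathcal{R}$. For an allocation $a=(a_1,\dots,a_n)\in\mathcal{A}=\prod_i\mathcal{A}_i$, let $|a|_r=|\{i\in N: r\in a_i\}|$. The system welfare is $W(a)=\sum_{r\in\cup_i a_i}W_r(|a|_r)$ and player $i$'s utility is $U_i(a)=\sum_{r\in a_i}F_r(|a|_r)$. A pure Nash equilibrium is an $a^{ne}\in\mathcal{A}$ with $U_i(a^{ne})\ge U_i(a_i,a^{ne}_{-i})$ for all $a_i\in\mathcal{A}_i$, $i\in N$. The price of anarchy of a game $G$ is $\mathrm{PoA}(G)=\min_{a\in\mathrm{NE}(G)}W(a)/\max_{a\in\mathcal{A}}W(a)$, and of a set of games is the infimum over the set. A utility mechanism is a map $\mathcal{F}$ assigning to each welfare function $W_r$ a local utility function $F_r=\mathcal{F}(W_r)$. *)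

theory Defs
  imports Complex_Main
begin

text \<open>Players are 0,...,n-1. An allocation is a function from players to sets of
resources, with the empty set outside the player range (canonical representative).\<close>

definition is_game :: "nat \<Rightarrow> 'r set \<Rightarrow> (nat \<Rightarrow> 'r set set) \<Rightarrow> bool" where
  "is_game n R A \<longleftrightarrow> finite R \<and> (\<forall>i<n. A i \<noteq> {} \<and> A i \<subseteq> Pow R)"

definition allocs :: "nat \<Rightarrow> (nat \<Rightarrow> 'r set set) \<Rightarrow> (nat \<Rightarrow> 'r set) set" where
  "allocs n A = {a. (\<forall>i<n. a i \<in> A i) \<and> (\<forall>i\<ge>n. a i = {})}"

definition load :: "nat \<Rightarrow> (nat \<Rightarrow> 'r set) \<Rightarrow> 'r \<Rightarrow> nat" where
  "load n a r = card {i. i < n \<and> r \<in> a i}"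

definition welfare :: "nat \<Rightarrow> ('r \<Rightarrow> nat \<Rightarrow> real) \<Rightarrow> (nat \<Rightarrow> 'r set) \<Rightarrow> real" where
  "welfare n W a = (\<Sum>r\<in>(\<Union>i<n. a i). W r (load n a r))"

definition utility :: "nat \<Rightarrow> ('r \<Rightarrow> nat \<Rightarrow> real) \<Rightarrow> (nat \<Rightarrow> 'r set) \<Rightarrow> nat \<Rightarrow> real" where
  "utility n F a i = (\<Sum>r\<in>a i. F r (load n a r))"

definition is_NE :: "nat \<Rightarrow> (nat \<Rightarrow> 'r set set) \<Rightarrow> ('r \<Rightarrow> nat \<Rightarrow> real) \<Rightarrow> (nat \<Rightarrow> 'r set) \<Rightarrow> bool" where
  "is_NE n A F a \<longleftrightarrow> a \<in> allocs n A \<and>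
     (\<forall>i<n. \<forall>ai\<in>A i. utility n F (a(i := ai)) i \<le> utility n F a i)"

definition admissible :: "real \<Rightarrow> nat \<Rightarrow> (nat \<Rightarrow> real) \<Rightarrow> bool" where
  "admissible c n W \<longleftrightarrow> W 0 = 0 \<and> (\<forall>x\<ge>1. W x > 0) \<and> mono W \<and>
     (\<forall>x. W (x + 2) - W (x + 1) \<le> W (x + 1) - W x) \<and>
     1 - (W n - W (n - 1)) / W 1 \<le> c"

definition rho :: "real \<Rightarrow> nat \<Rightarrow> real" where
  "rho c k = inverse (1 - c * (real k ^ k * exp (- real k) / fact k))"

definition Vc :: "real \<Rightarrow> nat \<Rightarrow> nat \<Rightarrow> real" where
  "Vc c k x = (1 - c) * real x + c * real (min x k)"

text \<open>F^c_k(1) = 1 and the recursion for x \<ge> 1; the value at 0 is irrelevant (set to 0).\<close>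
fun Fc :: "real \<Rightarrow> nat \<Rightarrow> nat \<Rightarrow> real" where
  "Fc c k 0 = 0"
| "Fc c k (Suc 0) = 1"
| "Fc c k (Suc (Suc x)) =
     max ((1 / real k) * (real (Suc x) * Fc c k (Suc x) - Vc c k (Suc x) * rho c k) + 1) (1 - c)"

definition eta0 :: "real \<Rightarrow> (nat \<Rightarrow> real) \<Rightarrow> nat \<Rightarrow> real" where
  "eta0 c W k = (if k = 1 then (2 * W 1 - W 2) / c
                 else (2 * W k - W (k - 1) - W (k + 1)) / c)"

definition eta :: "real \<Rightarrow> nat \<Rightarrow> (nat \<Rightarrow> real) \<Rightarrow> nat \<Rightarrow> real" where
  "eta c n W k = (if k = n then W 1 - (\<Sum>j=1..n-1. eta0 c W j) else eta0 c W k)"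

definition mech :: "real \<Rightarrow> nat \<Rightarrow> (nat \<Rightarrow> real) \<Rightarrow> nat \<Rightarrow> real" where
  "mech c n W x = (\<Sum>k=1..n. eta c n W k * Fc c k x)"

end

theory Submission
  imports Defs "HOL-Library.Nat_Bijection"
begin

definition mm :: "nat \<Rightarrow> nat \<Rightarrow> real" where "mm k j = real k ^ j / fact j"
definition Sl :: "nat \<Rightarrow> nat \<Rightarrow> real" where "Sl k j = (\<Sum>i<j. mm k i)"

lemma mm_0[simp]: "mm k 0 = 1" by (simp add: mm_def)

lemma mm_Suc: "mm k (Suc j) = mm k j * real k / real (Suc j)"
  by (simp add: mm_def field_simps)

lemma mm_pos: "k \<ge> 1 \<Longrightarrow> mm k j > 0"
  by (simp add: mm_def)

lemma mm_nonneg: "mm k j \<ge> 0"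
  by (simp add: mm_def)

lemma Sl_Suc: "Sl k (Suc j) = Sl k j + mm k j"
  by (simp add: Sl_def)

lemma Sl_nonneg: "Sl k j \<ge> 0"
  by (simp add: Sl_def sum_nonneg mm_nonneg)

lemma mm_sums: "mm k sums exp (real k)"
proof -
  have "(\<lambda>n. real k ^ n /\<^sub>R fact n) sums exp (real k)" by (rule exp_converges)
  moreover have "(\<lambda>n. real k ^ n /\<^sub>R fact n) = mm k"
    by (auto simp: mm_def scaleR_conv_of_real divide_inverse mult.commute)
  ultimately show ?thesis by simp
qed

lemma Sl_le_exp: "Sl k j \<le> exp (real k)"
proof -
  have "Sl k j \<le> suminf (mm k)"
    unfolding Sl_def by (rule sum_le_suminf) (use mm_sums sums_summable mm_nonneg in auto)
  thus ?thesis using mm_sums sums_unique by metis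
qed

lemma tail_bound:
  assumes "k \<ge> 1" "l > k"
  shows "exp (real k) - Sl k l \<le> mm k l * real l / (real l - real k)"
proof -
  have sm: "summable (mm k)" using mm_sums sums_summable by blast
  have e: "exp (real k) = (\<Sum>n. mm k (n + l)) + Sl k l"
    using suminf_split_initial_segment[OF sm, of l] mm_sums sums_unique unfolding Sl_def by metis
  have q: "0 \<le> real k / real l" "real k / real l < 1" using assms by auto
  have b: "mm k (n + l) \<le> mm k l * (real k / real l) ^ n" for n
  proof (induction n)
    case 0 then show ?case by simp
  next
    case (Suc n)
    have "mm k (Suc n + l) = mm k (n + l) * real k / real (Suc (n + l))" by (simp add: mm_Suc)
    also have "\<dots> = mm k (n + l) * (real k / real (Suc (n + l)))" by simp
    also have "\<dots> \<le> mm k (n + l) * (real k / real l)"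
      using assms mm_nonneg[of k "n+l"]
      by (intro mult_left_mono divide_left_mono) auto
    also have "\<dots> \<le> mm k l * (real k / real l) ^ n * (real k / real l)"
      using Suc q by (intro mult_right_mono) auto
    finally show ?case by (simp add: algebra_simps)
  qed
  have "(\<Sum>n. mm k (n + l)) \<le> (\<Sum>n. mm k l * (real k / real l) ^ n)"
    apply (rule suminf_le[OF b])
    using summable_ignore_initial_segment[OF sm] apply simp
    using summable_geometric[of "real k / real l"] q by (intro summable_mult) auto
  also have "\<dots> = mm k l * (1 / (1 - real k / real l))"
    using suminf_geometric[of "real k / real l"] q suminf_mult[of "\<lambda>n. (real k / real l) ^ n" "mm k l"]
      summable_geometric[of "real k / real l"] by auto
  also have "\<dots> = mm k l * real l / (real l - real k)" using assms by (simp add: field_simps)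
  finally show ?thesis using e by linarith
qed

lemma T_fact: "Sl k (Suc j) * (real k - real j - 1) \<le> real k * mm k j"
proof (induction j)
  case 0 then show ?case by (simp add: Sl_def)
next
  case (Suc j)
  have a: "Sl k (Suc (Suc j)) = Sl k (Suc j) + mm k (Suc j)" by (rule Sl_Suc)
  have b: "real k * mm k j = real (Suc j) * mm k (Suc j)" by (simp add: mm_Suc)
  have "Sl k (Suc (Suc j)) * (real k - real (Suc j) - 1)
     = Sl k (Suc j) * (real k - real j - 1) - Sl k (Suc j) + mm k (Suc j) * (real k - real j - 2)"
    by (simp add: a algebra_simps)
  also have "\<dots> \<le> real k * mm k j + mm k (Suc j) * (real k - real j - 2)"
    using Suc Sl_nonneg[of k "Suc j"] by linarith
  also have "\<dots> = mm k (Suc j) * (real k - 1)" by (simp add: b algebra_simps)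
  also have "\<dots> \<le> real k * mm k (Suc j)" using mm_nonneg[of k "Suc j"] by (simp add: algebra_simps)
  finally show ?case .
qed

lemma ratio_step:
  assumes "k \<ge> 1"
  shows "mm k (Suc j) * Sl k (Suc j) \<le> mm k j * Sl k (Suc (Suc j))"
proof -
  have T: "Sl k (Suc j) * (real k - real j - 1) \<le> real k * mm k j" by (rule T_fact)
  have "mm k (Suc j) * Sl k (Suc j) = mm k j * (real k * Sl k (Suc j)) / real (Suc j)"
    by (simp add: mm_Suc)
  also have "\<dots> \<le> mm k j * (real (Suc j) * Sl k (Suc j) + real k * mm k j) / real (Suc j)"
    using T mm_nonneg[of k j]
    by (intro divide_right_mono mult_left_mono) (auto simp: algebra_simps)
  also have "\<dots> = mm k j * Sl k (Suc (Suc j))"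
    by (simp add: Sl_Suc mm_Suc field_simps)
  finally show ?thesis .
qed

lemma pS:
  assumes "k \<ge> 1" "j \<le> k"
  shows "mm k k * Sl k (Suc j) \<le> exp (real k) * mm k j"
  using assms(2)
proof (induction j rule: inc_induct)
  case base
  show ?case using Sl_le_exp[of k "Suc k"] mm_nonneg[of k k]
    by (simp add: mult.commute mult_left_mono)
next
  case (step j)
  have r: "mm k (Suc j) * Sl k (Suc j) \<le> mm k j * Sl k (Suc (Suc j))" by (rule ratio_step[OF assms(1)])
  have pos: "mm k (Suc j) > 0" using mm_pos assms by auto
  have "mm k (Suc j) * (mm k k * Sl k (Suc j)) = mm k k * (mm k (Suc j) * Sl k (Suc j))" by simp
  also have "\<dots> \<le> mm k k * (mm k j * Sl k (Suc (Suc j)))"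
    using r mm_nonneg by (intro mult_left_mono) auto
  also have "\<dots> = mm k j * (mm k k * Sl k (Suc (Suc j)))" by simp
  also have "\<dots> \<le> mm k j * (exp (real k) * mm k (Suc j))"
    using step.IH mm_nonneg by (intro mult_left_mono) auto
  finally have "mm k (Suc j) * (mm k k * Sl k (Suc j)) \<le> mm k (Suc j) * (exp (real k) * mm k j)"
    by (simp add: algebra_simps)
  thus ?case using pos by simp
qed


lemma p_eq: "real k ^ k * exp (- real k) / fact k = mm k k / exp (real k)"
  by (simp add: mm_def exp_minus field_simps)

lemma fact_pow_aux: "real (Suc k) ^ Suc k / fact (Suc k) = real (Suc k) ^ k / fact k"
  by (simp add: power_Suc del: of_nat_Suc)

lemma mm_diag_le: "k \<ge> 1 \<Longrightarrow> mm k k \<le> exp (real k - 1)"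
proof (induction k rule: dec_induct)
  case base then show ?case by (simp add: mm_def)
next
  case (step k)
  have kpos: "real k > 0" using step by auto
  have "mm (Suc k) (Suc k) = real (Suc k) ^ k / fact k"
    unfolding mm_def by (rule fact_pow_aux)
  also have "\<dots> = mm k k * (1 + 1 / real k) ^ k"
  proof -
    have "(1 + 1/real k) = real (Suc k)/real k" using kpos by (simp add: field_simps)
    hence "(1 + 1/real k)^k = real (Suc k)^k / real k ^k" by (simp add: power_divide)
    moreover have "real k ^ k \<noteq> 0" using kpos by simp
    ultimately show ?thesis unfolding mm_def by simp
  qed
  also have "\<dots> \<le> exp (real k - 1) * exp 1"
  proof -
    have "(1 + 1 / real k) ^ k \<le> exp 1" using exp_ge_one_plus_x_over_n_power_n[where x=1 and n=k] kpos by simp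
    thus ?thesis using step.IH by (intro mult_mono) (auto simp: mm_nonneg)
  qed
  also have "\<dots> = exp (real (Suc k) - 1)" by (simp add: exp_add[symmetric])
  finally show ?case .
qed

lemma P_le: "k \<ge> 1 \<Longrightarrow> mm k k / exp (real k) \<le> 1 / exp 1"
  using mm_diag_le[of k] by (simp add: divide_simps exp_diff mult.commute)

lemma P_pos: "k \<ge> 1 \<Longrightarrow> mm k k / exp (real k) > 0"
  using mm_pos by auto

lemma e_gt2: "exp (1::real) > 2"
  using exp_ge_add_one_self_aux[of 1] exp_gt_one
  by (smt (verit) exp_ge_add_one_self_aux exp_le_cancel_iff exp_ln ln_2_less_1)

lemma rho_facts:
  assumes "k \<ge> 1" "0 < c" "c \<le> 1"
  shows "rho c k \<ge> 1"
    and "(rho c k - 1) * exp (real k) = rho c k * c * mm k k"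
    and "rho c k \<le> inverse (1 - c / exp 1)"
    and "1 - c * (mm k k / exp (real k)) > 0"
proof -
  let ?P = "mm k k / exp (real k)"
  have P1: "?P \<le> 1 / exp 1" "?P > 0" using P_le P_pos assms by auto
  have e1: "1 / exp (1::real) < 1" using e_gt2 by simp
  have cP: "c * ?P \<le> c / exp 1" using P1 assms mult_left_mono[OF P1(1), of c] by simp
  have cP2: "c / exp 1 < 1" using e1 assms
    by (smt (verit, ccfv_SIG) divide_right_mono exp_gt_zero)
  have d: "1 - c * ?P > 0" using cP cP2 by linarith
  show "1 - c * ?P > 0" by (rule d)
  have r: "rho c k = inverse (1 - c * ?P)" unfolding rho_def p_eq by simp
  have cPpos: "c * ?P \<ge> 0" using P1(2) assms(2) by (intro mult_nonneg_nonneg) auto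
  show "rho c k \<ge> 1" unfolding r using d cPpos by (simp add: one_le_inverse)
  have "(rho c k - 1) = rho c k * c * ?P" unfolding r using d by (simp add: field_simps)
  then show "(rho c k - 1) * exp (real k) = rho c k * c * mm k k" by simp
  show "rho c k \<le> inverse (1 - c / exp 1)" unfolding r
    using d cP cP2 by (intro le_imp_inverse_le) auto
qed

lemma alg_b0: fixes r c q S k K :: real assumes "q>0" "k>0" "K = k + 1"
  shows "(1/k)*(K*(1 - (r-1)*S/(q*K/k)) - ((1-c)*K + c*k)*r) + 1
     = r*(1-c) + (r*c*(q*K/k) - (r-1)*(S + q*K/k + q))/q"
proof -
  have "K > 0" using assms by simp
  then show ?thesis using assms(1,2) by (simp add: field_simps)
qed
lemma alg_b: fixes r c m S k :: real assumes "m>0" "k>0" shows "(1/k)*((k+1)*(1 - (r-1)*S/m) - ((1-c)*(k+1) + c*k)*r) + 1 = r*(1-c) + (r*c*m - (r-1)*(S + m + m*k/(k+1)))/(m*k/(k+1))"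
proof -
  define q where "q = m*k/(k+1)"
  have kk: "k + 1 > 0" using assms by simp
  have q: "q > 0" "m = q*(k+1)/k" using assms kk by (auto simp: q_def)
  show ?thesis unfolding q_def[symmetric] using alg_b0[OF q(1) assms(2) refl] q(2) by simp
qed

lemma alg_c: fixes r c q T E k J :: real assumes "q>0" "k>0" "J>0"
  shows "(1/k)*(J*(r*(1-c) + (r-1)*(E - T)/(q*J/k)) - ((1-c)*J + c*k)*r) + 1
     = r*(1-c) + (r-1)*(E - T - q)/q"
  using assms by (simp add: field_simps)

definition phi :: "real \<Rightarrow> nat \<Rightarrow> nat \<Rightarrow> real" where
  "phi c k j = (if j \<le> k then 1 - (rho c k - 1) * Sl k j / mm k j
     else rho c k * (1 - c) + (rho c k - 1) * (exp (real k) - Sl k (Suc j)) / mm k j)"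

lemma aux1: "(P::real)*(S+m) \<le> m \<Longrightarrow> P*S \<le> m*(1-P)" by (simp add: algebra_simps)

lemma aux2: "(a::real) = b*c*d \<Longrightarrow> a*S = c*(b*(d*S))" by (simp add: ac_simps)

lemma phi_ge:
  assumes "k \<ge> 1" "0 < c" "c \<le> 1"
  shows "phi c k j \<ge> 1 - c"
proof (cases "j \<le> k")
  case True
  let ?r = "rho c k" and ?P = "mm k k / exp (real k)"
  note rf = rho_facts[OF assms]
  have mpos: "mm k j > 0" using mm_pos assms by auto
  have epos: "exp (real k) > 0" by simp
  have ps: "mm k k * Sl k (Suc j) \<le> exp (real k) * mm k j" by (rule pS[OF assms(1) True])
  have "?P * (Sl k j + mm k j) = (mm k k * Sl k (Suc j)) / exp (real k)" by (simp add: Sl_Suc)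
  also have "\<dots> \<le> (exp (real k) * mm k j) / exp (real k)" using ps epos by (intro divide_right_mono) auto
  finally have "?P * (Sl k j + mm k j) \<le> mm k j" using epos by simp
  hence "?P * Sl k j \<le> mm k j * (1 - ?P)" by (rule aux1)
  also have "\<dots> \<le> mm k j * (1 - c * ?P)"
  proof -
    have "c * ?P \<le> 1 * ?P" using P_pos[OF assms(1)] assms by (intro mult_right_mono) auto
    thus ?thesis using mpos by (intro mult_left_mono) auto
  qed
  finally have a: "?P * Sl k j \<le> mm k j * (1 - c * ?P)" .
  have r: "?r = inverse (1 - c * ?P)" unfolding rho_def p_eq by simp
  have "(?r - 1) = ?r * c * ?P" unfolding r using rf(4) by (simp add: field_simps)
  hence "(?r - 1) * Sl k j = c * (?r * (?P * Sl k j))" by (rule aux2)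
  also have "\<dots> \<le> c * (?r * (mm k j * (1 - c * ?P)))"
    using a assms rf(1) by (intro mult_left_mono) auto
  also have "\<dots> = c * mm k j" unfolding r using rf(4) by (simp add: field_simps)
  finally have "(?r - 1) * Sl k j / mm k j \<le> c" using mpos by (simp add: divide_simps mult.commute)
  thus ?thesis using True unfolding phi_def by simp
next
  case False
  note rf = rho_facts[OF assms]
  have "exp (real k) - Sl k (Suc j) \<ge> 0" using Sl_le_exp by simp
  hence "(rho c k - 1) * (exp (real k) - Sl k (Suc j)) / mm k j \<ge> 0"
    using rf(1) mm_nonneg by auto
  moreover have "rho c k * (1 - c) \<ge> 1 - c" using rf(1) assms
    by (simp add: mult_le_cancel_right1)
  ultimately show ?thesis using False unfolding phi_def by simp
qed

lemma phi_rec: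
  assumes "k \<ge> 1" "0 < c" "c \<le> 1"
  shows "(1 / real k) * (real (Suc j) * phi c k j - Vc c k (Suc j) * rho c k) + 1 = phi c k (Suc j)"
proof -
  let ?r = "rho c k" and ?E = "exp (real k)"
  note rf = rho_facts[OF assms]
  have kpos: "real k > 0" using assms by auto
  have mpos: "mm k j > 0" using mm_pos assms by auto
  have ms: "mm k (Suc j) = mm k j * real k / real (Suc j)" by (rule mm_Suc)
  have ss: "Sl k (Suc j) = Sl k j + mm k j" by (rule Sl_Suc)
  have ss2: "Sl k (Suc (Suc j)) = Sl k j + mm k j + mm k (Suc j)" by (simp add: Sl_Suc)
  consider (a) "Suc j \<le> k" | (b) "j = k" | (c) "j > k" by linarith
  then show ?thesis
  proof cases
    case a
    have V: "Vc c k (Suc j) = real (Suc j)" using a by (simp add: Vc_def algebra_simps)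
    show ?thesis using a kpos mpos unfolding phi_def V
      by (simp add: ms ss field_simps)
  next
    case b
    have V: "Vc c k (Suc j) = (1 - c) * (real k + 1) + c * real k" using b by (simp add: Vc_def)
    have id: "(?r - 1) * ?E = ?r * c * mm k k" by (rule rf(2))
    have m1: "mm k (Suc k) = mm k k * real k / (real k + 1)" by (simp add: mm_Suc)
    have mk: "mm k k > 0" using mm_pos assms by auto
    have "phi c k (Suc j) = ?r * (1 - c) + ((?r - 1) * ?E - (?r - 1) * Sl k (Suc (Suc j))) / mm k (Suc j)"
      using b unfolding phi_def by (simp add: algebra_simps)
    also have "\<dots> = ?r * (1 - c) + (?r * c * mm k k - (?r - 1) * (Sl k k + mm k k + mm k k * real k / (real k + 1))) / (mm k k * real k / (real k + 1))"
      using b id ss2 m1 by simp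
    finally have L: "phi c k (Suc j) = \<dots>" .
    have P: "phi c k j = 1 - (?r - 1) * Sl k k / mm k k" using b unfolding phi_def by simp
    have R: "real (Suc j) = real k + 1" using b by simp
    show ?thesis unfolding L P V R by (rule alg_b[OF mk kpos])
  next
    case c
    have V: "Vc c k (Suc j) = (1 - c) * real (Suc j) + c * real k" using c by (simp add: Vc_def)
    have m1: "mm k (Suc j) > 0" using mm_pos assms by auto
    have mj: "mm k j = mm k (Suc j) * real (Suc j) / real k" using kpos by (simp add: mm_Suc)
    have P1: "phi c k j = ?r * (1 - c) + (?r - 1) * (?E - Sl k (Suc j)) / (mm k (Suc j) * real (Suc j) / real k)"
      using c unfolding phi_def mj by simp
    have P2: "phi c k (Suc j) = ?r * (1 - c) + (?r - 1) * (?E - Sl k (Suc j) - mm k (Suc j)) / mm k (Suc j)"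
      using c unfolding phi_def by (simp add: Sl_Suc algebra_simps)
    show ?thesis unfolding P1 P2 V by (rule alg_c[OF m1 kpos]) simp
  qed
qed

lemma Fc_eq:
  assumes "k \<ge> 1" "0 < c" "c \<le> 1"
  shows "Fc c k (Suc j) = phi c k j"
proof (induction j)
  case 0 then show ?case by (simp add: phi_def Sl_def)
next
  case (Suc j)
  have "Fc c k (Suc (Suc j)) = max ((1 / real k) * (real (Suc j) * phi c k j - Vc c k (Suc j) * rho c k) + 1) (1 - c)"
    using Suc by simp
  also have "\<dots> = phi c k (Suc j)" using phi_rec[OF assms] phi_ge[OF assms] by simp
  finally show ?case .
qed


context
  fixes c :: real and k :: nat
  assumes k1: "k \<ge> 1" and c0: "0 < c" and c1: "c \<le> 1"
begin

lemma kpos': "real k > 0" using k1 by simp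

lemma Fc_1: "Fc c k 1 = 1" by simp

lemma Fc_lo: "l \<ge> 1 \<Longrightarrow> Fc c k l \<ge> 1 - c"
  using Fc_eq[OF k1 c0 c1, of "l - 1"] phi_ge[OF k1 c0 c1, of "l - 1"] by simp

lemma Fc_rec:
  assumes "l \<ge> 1"
  shows "real k * Fc c k (Suc l) \<ge> real l * Fc c k l - rho c k * Vc c k l + real k"
proof -
  obtain x where x: "l = Suc x" using assms by (cases l) auto
  have "Fc c k (Suc l) \<ge> (1 / real k) * (real l * Fc c k l - Vc c k l * rho c k) + 1"
    unfolding x by simp
  hence "real k * Fc c k (Suc l) \<ge> real k * ((1 / real k) * (real l * Fc c k l - Vc c k l * rho c k) + 1)"
    using kpos' by (intro mult_left_mono) auto
  thus ?thesis using kpos' by (simp add: algebra_simps)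
qed

lemma V_le: "Vc c k y = real y" if "y \<le> k" using that by (simp add: Vc_def algebra_simps)
lemma V_ge: "Vc c k y = (1 - c) * real y + c * real k" if "y \<ge> k" using that by (simp add: Vc_def)
lemma V_le_id: "Vc c k y \<le> real y" using c0 c1 by (simp add: Vc_def algebra_simps)
lemma V_nonneg: "Vc c k y \<ge> 0" using c0 c1 by (simp add: Vc_def)

lemma rho1: "rho c k \<ge> 1" using rho_facts[OF k1 c0 c1] by simp

lemma C1:
  assumes "1 \<le> l" "l < k"
  shows "real k - (real k - real l) * Fc c k (Suc l) \<le> rho c k * real l"
proof -
  let ?r = "rho c k"
  have F: "Fc c k (Suc l) = 1 - (?r - 1) * Sl k l / mm k l"
    using Fc_eq[OF k1 c0 c1, of l] assms unfolding phi_def by simp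
  obtain j where j: "l = Suc j" using assms by (cases l) auto
  have e1: "real l * mm k l = real k * mm k j" unfolding j mm_Suc by simp
  have e2: "Sl k l * (real k - real l) = Sl k (Suc j) * (real k - real j - 1)" unfolding j by simp
  have T: "Sl k l * (real k - real l) \<le> real l * mm k l"
    unfolding e1 e2 by (rule T_fact)
  have mpos: "mm k l > 0" using mm_pos k1 by auto
  have "(real k - real l) * ((?r - 1) * Sl k l / mm k l) = (?r - 1) * (Sl k l * (real k - real l)) / mm k l"
    by (simp add: algebra_simps)
  also have "\<dots> \<le> (?r - 1) * (real l * mm k l) / mm k l"
    using T rho1 mpos by (intro divide_right_mono mult_left_mono) auto
  also have "\<dots> = (?r - 1) * real l" using mpos by simp
  finally have a: "(real k - real l) * ((?r - 1) * Sl k l / mm k l) \<le> (?r - 1) * real l" .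
  show ?thesis unfolding F using a by (simp add: algebra_simps)
qed

lemma phi_second:
  assumes "j \<ge> k"
  shows "phi c k j = rho c k * (1 - c) + (rho c k - 1) * (exp (real k) - Sl k (Suc j)) / mm k j"
proof (cases "j = k")
  case True
  let ?r = "rho c k" and ?E = "exp (real k)"
  have id: "(?r - 1) * ?E = ?r * c * mm k k" using rho_facts[OF k1 c0 c1] by simp
  have mpos: "mm k k > 0" using mm_pos k1 by auto
  have "?r * (1 - c) + (?r - 1) * (?E - Sl k (Suc k)) / mm k k
      = ?r * (1 - c) + ((?r - 1) * ?E - (?r - 1) * (Sl k k + mm k k)) / mm k k"
    by (simp add: Sl_Suc algebra_simps)
  also have "\<dots> = ?r * (1 - c) + (?r * c * mm k k - (?r - 1) * (Sl k k + mm k k)) / mm k k"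
    unfolding id ..
  also have "\<dots> = 1 - (?r - 1) * Sl k k / mm k k"
    using mpos by (simp add: field_simps)
  finally show ?thesis using True unfolding phi_def by simp
next
  case False then show ?thesis using assms unfolding phi_def by simp
qed

lemma C3:
  assumes "l \<ge> k"
  shows "real k + (real l - real k) * Fc c k l \<le> rho c k * Vc c k l"
proof (cases "l = k")
  case True
  then show ?thesis using rho1 V_le[of k] kpos' by simp
next
  case False
  let ?r = "rho c k" and ?E = "exp (real k)"
  obtain j where j: "l = Suc j" "j \<ge> k" using assms False by (cases l) auto
  have F: "Fc c k l = ?r * (1 - c) + (?r - 1) * (?E - Sl k l) / mm k j"
    using Fc_eq[OF k1 c0 c1, of j] phi_second[OF j(2)] j by simp
  have mpos: "mm k j > 0" using mm_pos k1 by auto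
  have kl: "k < l" using j by simp
  have tb: "?E - Sl k l \<le> mm k l * real l / (real l - real k)"
    using tail_bound[OF k1 kl] .
  have ml: "mm k l * real l = mm k j * real k" unfolding j by (simp add: mm_Suc)
  have lk: "real l - real k > 0" using j by simp
  have "(real l - real k) * ((?r - 1) * (?E - Sl k l) / mm k j)
      = (?r - 1) * ((real l - real k) * (?E - Sl k l)) / mm k j" by (simp add: algebra_simps)
  also have "\<dots> \<le> (?r - 1) * (mm k j * real k) / mm k j"
  proof -
    have "(real l - real k) * (?E - Sl k l) \<le> (real l - real k) * (mm k l * real l / (real l - real k))"
      using tb lk by (intro mult_left_mono) auto
    also have "\<dots> = mm k j * real k" using lk ml by simp
    finally show ?thesis using rho1 mpos by (intro divide_right_mono mult_left_mono) auto
  qed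
  also have "\<dots> = (?r - 1) * real k" using mpos by simp
  finally have a: "(real l - real k) * ((?r - 1) * (?E - Sl k l) / mm k j) \<le> (?r - 1) * real k" .
  have V: "Vc c k l = (1 - c) * real l + c * real k" using V_ge assms by simp
  show ?thesis unfolding F V using a by (simp add: algebra_simps)
qed

lemma Fc_le1: "l \<ge> 1 \<Longrightarrow> Fc c k l \<le> 1"
proof (induction l rule: dec_induct)
  case base then show ?case by simp
next
  case (step l)
  have ll: "real l * Fc c k l \<le> rho c k * Vc c k l"
  proof (cases "l \<le> k")
    case True
    have "real l * Fc c k l \<le> real l * rho c k"
      using step.IH rho1 by (intro mult_left_mono) auto
    thus ?thesis using V_le[OF True] by (simp add: mult.commute)
  next
    case False
    have c3: "real k + (real l - real k) * Fc c k l \<le> rho c k * Vc c k l" using C3 False by simp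
    have "real k * Fc c k l \<le> real k" using step.IH kpos' by simp
    thus ?thesis using c3 by (simp add: algebra_simps)
  qed
  obtain x where x: "l = Suc x" using step by (cases l) auto
  have "(1 / real k) * (real l * Fc c k l - Vc c k l * rho c k) + 1 \<le> 1"
    using ll kpos' by (simp add: divide_simps mult.commute)
  then show ?case unfolding x using c0 by simp
qed

lemma C2:
  assumes "l \<ge> k"
  shows "real k + (real l - real k + 1) * Fc c k l - Fc c k (Suc l) \<le> rho c k * Vc c k l"
proof -
  let ?f0 = "Fc c k l" and ?f1 = "Fc c k (Suc l)" and ?v = "rho c k * Vc c k l"
  have l1: "l \<ge> 1" using assms k1 by simp
  have rec: "real k * ?f1 \<ge> real l * ?f0 - ?v + real k" using Fc_rec[OF l1] by simp
  have c3: "real k + (real l - real k) * ?f0 \<le> ?v" using C3[OF assms] .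
  have m: "(real k - 1) * (real k + (real l - real k) * ?f0) \<le> (real k - 1) * ?v"
    using c3 k1 by (intro mult_left_mono) auto
  have "real k * (real k + (real l - real k + 1) * ?f0 - ?f1) \<le> real k * ?v"
    using rec m by (simp add: algebra_simps)
  thus ?thesis using kpos' by simp
qed

end


context
  fixes c :: real and k :: nat
  assumes k1: "k \<ge> 1" and c0: "0 < c" and c1: "c \<le> 1"
begin

lemma step1:
  assumes fl: "1 - c \<le> f1" "f1 \<le> 1"
  shows "Vc c k (x + b) - real b * f1 \<le> Vc c k (x + (k - x)) - real (k - x) * f1"
proof (cases "b \<le> k - x")
  case True
  show ?thesis
  proof (cases "b = k - x")
    case True then show ?thesis by simp
  next
    case False
    hence xk: "x < k" "x + b \<le> k" using True by auto
    have V1: "Vc c k (x + b) = real (x + b)" using V_le[OF k1 c0 c1] xk by simp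
    have V2: "Vc c k (x + (k - x)) = real k" using V_le[OF k1 c0 c1] xk by simp
    have rb: "real (k - x) = real k - real x" using xk by simp
    have "(real k - real x - real b) * (1 - f1) \<ge> 0" using xk fl by (intro mult_nonneg_nonneg) auto
    thus ?thesis unfolding V1 V2 rb by (simp add: algebra_simps)
  qed
next
  case False
  have a: "x + b \<ge> k" "x + (k - x) \<ge> k" using False by auto
  have V1: "Vc c k (x + b) = (1 - c) * real (x + b) + c * real k" using V_ge[OF k1 c0 c1] a by simp
  have V2: "Vc c k (x + (k - x)) = (1 - c) * real (x + (k - x)) + c * real k" using V_ge[OF k1 c0 c1] a by simp
  have "(real b - real (k - x)) * (f1 - (1 - c)) \<ge> 0" using False fl by (intro mult_nonneg_nonneg) auto
  thus ?thesis unfolding V1 V2 by (simp add: algebra_simps)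
qed

lemma step2_big:
  assumes "x \<ge> k"
  shows "Vc c k x + real a * Fc c k (a + x) \<le> rho c k * Vc c k (a + x)"
proof -
  let ?r = "rho c k" and ?f0 = "Fc c k (a + x)"
  have r1: "?r \<ge> 1" using rho1[OF k1 c0 c1] .
  have c3: "real k + (real (a + x) - real k) * ?f0 \<le> ?r * Vc c k (a + x)"
    using C3[OF k1 c0 c1, of "a + x"] assms by simp
  have Vx: "Vc c k x = (1 - c) * real x + c * real k" using V_ge[OF k1 c0 c1] assms by simp
  have Vl: "Vc c k (a + x) = (1 - c) * real (a + x) + c * real k" using V_ge[OF k1 c0 c1] assms by simp
  have "(1 - c) * (real x - real k) \<ge> 0" using assms c1 by (intro mult_nonneg_nonneg) auto
  hence Vxk: "Vc c k x \<ge> real k" unfolding Vx by (simp add: algebra_simps)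
  show ?thesis
  proof (cases "?f0 \<le> ?r * (1 - c)")
    case True
    have "real a * ?f0 \<le> real a * (?r * (1 - c))" using True by (intro mult_left_mono) auto
    moreover have "Vc c k x \<le> ?r * Vc c k x" using r1 V_nonneg[OF k1 c0 c1, of x]
      by (simp add: mult_le_cancel_right1)
    ultimately show ?thesis unfolding Vl using Vx by (simp add: algebra_simps)
  next
    case False
    have "real a * (?f0 - ?r * (1 - c)) \<le> (real (a + x) - real k) * (?f0 - ?r * (1 - c))"
      using False assms by (intro mult_right_mono) auto
    moreover have "(?r - 1) * real k \<le> (?r - 1) * Vc c k x" using r1 Vxk by (intro mult_left_mono) auto
    ultimately show ?thesis using c3 unfolding Vl Vx by (simp add: algebra_simps)
  qed
qed

lemma step2_small:
  assumes "x < k" "a + x \<ge> 1"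
  shows "real k + real a * Fc c k (a + x) - real (k - x) * Fc c k (Suc (a + x)) \<le> rho c k * Vc c k (a + x)"
proof -
  let ?r = "rho c k" and ?l = "a + x"
  let ?f0 = "Fc c k ?l" and ?f1 = "Fc c k (Suc ?l)"
  define E where "E y = real k + (real ?l - y) * ?f0 - (real k - y) * ?f1" for y :: real
  have goal: "real k + real a * ?f0 - real (k - x) * ?f1 = E (real x)"
    unfolding E_def using assms by (simp add: of_nat_diff)
  have E0: "E 0 \<le> ?r * Vc c k ?l"
    using Fc_rec[OF k1 c0 c1 assms(2)] unfolding E_def by (simp add: algebra_simps)
  have Elin: "E y = E 0 + y * (?f1 - ?f0)" for y unfolding E_def by (simp add: algebra_simps)
  show ?thesis unfolding goal
  proof (cases "?f1 \<le> ?f0")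
    case True
    have "real x * (?f1 - ?f0) \<le> 0" using True by (simp add: mult_nonneg_nonpos)
    thus "E (real x) \<le> ?r * Vc c k ?l" using E0 Elin[of "real x"] by simp
  next
    case False
    show "E (real x) \<le> ?r * Vc c k ?l"
    proof (cases "?l < k")
      case True
      have "real x * (?f1 - ?f0) \<le> real ?l * (?f1 - ?f0)"
        using False by (intro mult_right_mono) auto
      hence "E (real x) \<le> E (real ?l)" using Elin[of "real x"] Elin[of "real ?l"] by linarith
      also have "E (real ?l) = real k - (real k - real ?l) * ?f1" unfolding E_def by simp
      also have "\<dots> \<le> ?r * real ?l" using C1[OF k1 c0 c1 assms(2) True] by simp
      also have "\<dots> = ?r * Vc c k ?l" using V_le[OF k1 c0 c1, of ?l] True by simp
      finally show ?thesis .
    next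
      case nl: False
      have "real x * (?f1 - ?f0) \<le> (real k - 1) * (?f1 - ?f0)"
        using False assms by (intro mult_right_mono) auto
      hence "E (real x) \<le> E (real k - 1)" using Elin[of "real x"] Elin[of "real k - 1"] by linarith
      also have "E (real k - 1) = real k + (real ?l - real k + 1) * ?f0 - ?f1" unfolding E_def by simp
      also have "\<dots> \<le> ?r * Vc c k ?l" using C2[OF k1 c0 c1, of ?l] nl by simp
      finally show ?thesis .
    qed
  qed
qed

lemma basis_ineq:
  "Vc c k (x + b) + real a * Fc c k (a + x) - real b * Fc c k (Suc (a + x)) \<le> rho c k * Vc c k (a + x)"
proof (cases "a + x = 0")
  case True
  hence ax: "a = 0" "x = 0" by auto
  have "Vc c k b \<le> real b" by (rule V_le_id[OF k1 c0 c1])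
  thus ?thesis using ax by (simp add: Vc_def)
next
  case False
  hence l1: "a + x \<ge> 1" by linarith
  have fl: "1 - c \<le> Fc c k (Suc (a + x))" "Fc c k (Suc (a + x)) \<le> 1"
    using Fc_lo[OF k1 c0 c1] Fc_le1[OF k1 c0 c1] by auto
  have s1: "Vc c k (x + b) - real b * Fc c k (Suc (a + x))
      \<le> Vc c k (x + (k - x)) - real (k - x) * Fc c k (Suc (a + x))"
    by (rule step1[OF fl])
  show ?thesis
  proof (cases "x \<ge> k")
    case True
    have "k - x = 0" using True by simp
    hence "Vc c k (x + (k - x)) - real (k - x) * Fc c k (Suc (a + x)) = Vc c k x" by simp
    thus ?thesis using s1 step2_big[OF True, of a] by linarith
  next
    case False
    have "x + (k - x) = k" using False by simp
    hence "Vc c k (x + (k - x)) = real k" using V_le[OF k1 c0 c1, of k] by simp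
    moreover have "x < k" using False by simp
    ultimately show ?thesis using s1 step2_small[of x a] l1 by linarith
  qed
qed

end


lemma eta0_c: "c \<noteq> 0 \<Longrightarrow> W 0 = 0 \<Longrightarrow> j \<ge> 1 \<Longrightarrow> c * eta0 c W j = 2 * W j - W (j - 1) - W (j + 1)"
  by (auto simp: eta0_def numeral_2_eq_2)

lemma tele:
  assumes "c \<noteq> 0" "W 0 = 0"
  shows "c * (\<Sum>j=1..i. eta0 c W j) = W 1 - (W (i + 1) - W i)"
proof (induction i)
  case 0 then show ?case using assms by simp
next
  case (Suc i)
  have "c * (\<Sum>j=1..Suc i. eta0 c W j) = c * (\<Sum>j=1..i. eta0 c W j) + c * eta0 c W (Suc i)"
    by (simp add: distrib_left)
  also have "\<dots> = W 1 - (W (i + 1) - W i) + (2 * W (Suc i) - W i - W (Suc i + 1))"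
    using Suc eta0_c[of c W "Suc i"] assms by simp
  finally show ?case by simp
qed

lemma adm_facts:
  assumes "admissible c n W"
  shows "W 0 = 0" "W 1 > 0" "\<And>x. W (x + 2) - W (x + 1) \<le> W (x + 1) - W x"
    "1 - (W n - W (n - 1)) / W 1 \<le> c"
  using assms unfolding admissible_def by auto

lemma eta_nonneg:
  assumes adm: "admissible c n W" and c0: "0 < c" and k: "1 \<le> k" "k \<le> n"
  shows "eta c n W k \<ge> 0"
proof (cases "k = n")
  case True
  note af = adm_facts[OF adm]
  have n1: "n \<ge> 1" using k by simp
  have t: "c * (\<Sum>j=1..n-1. eta0 c W j) = W 1 - (W n - W (n - 1))"
    using tele[of c W "n - 1"] c0 af(1) n1 by simp
  have "W 1 - (W n - W (n - 1)) \<le> c * W 1"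
    using af(4) af(2) by (simp add: field_simps)
  hence "c * (\<Sum>j=1..n-1. eta0 c W j) \<le> c * W 1" using t by simp
  hence "(\<Sum>j=1..n-1. eta0 c W j) \<le> W 1" using c0 by simp
  thus ?thesis using True unfolding eta_def by simp
next
  case False
  note af = adm_facts[OF adm]
  have "W (k - 1 + 2) - W (k - 1 + 1) \<le> W (k - 1 + 1) - W (k - 1)" by (rule af(3))
  moreover have "k - 1 + 2 = k + 1" "k - 1 + 1 = k" using k by auto
  ultimately have "2 * W k - W (k - 1) - W (k + 1) \<ge> 0" by simp
  hence "c * eta0 c W k \<ge> 0" using eta0_c[of c W k] c0 af(1) k by simp
  hence "eta0 c W k \<ge> 0" using c0 by (simp add: zero_le_mult_iff)
  thus ?thesis using False unfolding eta_def by simp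
qed

lemma sum_eta: "n \<ge> 1 \<Longrightarrow> (\<Sum>k=1..n. eta c n W k) = W 1"
proof -
  assume n: "n \<ge> 1"
  obtain m where m: "n = Suc m" using n by (cases n) auto
  have "(\<Sum>k=1..n. eta c n W k) = eta c n W n + (\<Sum>k=1..n-1. eta c n W k)" unfolding m by simp
  also have "(\<Sum>k=1..n-1. eta c n W k) = (\<Sum>k=1..n-1. eta0 c W k)"
    by (rule sum.cong) (auto simp: eta_def)
  finally show ?thesis unfolding eta_def by simp
qed

lemma V_diff: "Vc c k (Suc y) - Vc c k y = (1 - c) + (if y < k then c else 0)"
  by (simp add: Vc_def algebra_simps)

lemma W_decomp:
  assumes adm: "admissible c n W" and c0: "0 < c" and y: "y \<le> n" and n1: "n \<ge> 1"
  shows "W y = (\<Sum>k=1..n. eta c n W k * Vc c k y)"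
  using y
proof (induction y)
  case 0 then show ?case using adm_facts(1)[OF adm] by (simp add: Vc_def)
next
  case (Suc y)
  note af = adm_facts[OF adm]
  have yn: "y < n" using Suc by simp
  have "(\<Sum>k=1..n. eta c n W k * Vc c k (Suc y)) - (\<Sum>k=1..n. eta c n W k * Vc c k y)
      = (\<Sum>k=1..n. eta c n W k * (Vc c k (Suc y) - Vc c k y))"
    by (simp add: sum_subtractf algebra_simps)
  also have "\<dots> = (\<Sum>k=1..n. eta c n W k * (1 - c) + (if k \<le> y then 0 else c * eta c n W k))"
    by (rule sum.cong) (auto simp: V_diff algebra_simps)
  also have "\<dots> = (\<Sum>k=1..n. eta c n W k * (1 - c)) + (\<Sum>k=1..n. if k \<le> y then 0 else c * eta c n W k)"
    by (rule sum.distrib)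
  also have "(\<Sum>k=1..n. eta c n W k * (1 - c)) = (1 - c) * W 1"
    using sum_eta[OF n1, of c W] by (simp add: sum_distrib_right[symmetric])
  also have "(\<Sum>k=1..n. if k \<le> y then 0 else c * eta c n W k) = c * W 1 - c * (\<Sum>k=1..y. eta0 c W k)"
  proof -
    have split: "{1..n} = {1..y} \<union> {y+1..n}" using yn by auto
    have "(\<Sum>k=1..n. if k \<le> y then 0 else c * eta c n W k)
        = (\<Sum>k=1..y. if k \<le> y then 0 else c * eta c n W k) + (\<Sum>k=y+1..n. if k \<le> y then 0 else c * eta c n W k)"
      unfolding split by (rule sum.union_disjoint) auto
    also have "\<dots> = (\<Sum>k=y+1..n. c * eta c n W k)" by simp
    also have "(\<Sum>k=1..n. c * eta c n W k) = (\<Sum>k=1..y. c * eta c n W k) + (\<Sum>k=y+1..n. c * eta c n W k)"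
      unfolding split by (rule sum.union_disjoint) auto
    hence "(\<Sum>k=y+1..n. c * eta c n W k) = c * W 1 - (\<Sum>k=1..y. c * eta c n W k)"
      using sum_eta[OF n1, of c W] by (simp add: sum_distrib_left[symmetric])
    also have "(\<Sum>k=1..y. c * eta c n W k) = c * (\<Sum>k=1..y. eta0 c W k)"
      unfolding sum_distrib_left using yn by (intro sum.cong) (auto simp: eta_def)
    finally show ?thesis .
  qed
  also have "c * (\<Sum>k=1..y. eta0 c W k) = W 1 - (W (y + 1) - W y)"
    using tele[of c W y] c0 af(1) by simp
  finally have "(\<Sum>k=1..n. eta c n W k * Vc c k (Suc y)) - (\<Sum>k=1..n. eta c n W k * Vc c k y) = W (Suc y) - W y"
    by (simp add: algebra_simps)
  thus ?case using Suc yn by simp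
qed

lemma combined:
  assumes adm: "admissible c n W" and c0: "0 < c" and c1: "c \<le> 1" and n1: "n \<ge> 1"
    and abx: "a + x + b \<le> n"
  shows "W (x + b) + real a * mech c n W (a + x) - real b * mech c n W (Suc (a + x))
         \<le> inverse (1 - c / exp 1) * W (a + x)"
proof -
  let ?rs = "inverse (1 - c / exp 1)"
  have "W (x + b) + real a * mech c n W (a + x) - real b * mech c n W (Suc (a + x))
     = (\<Sum>k=1..n. eta c n W k * (Vc c k (x + b) + real a * Fc c k (a + x) - real b * Fc c k (Suc (a + x))))"
  proof -
    have Wd: "W (x + b) = (\<Sum>k=1..n. eta c n W k * Vc c k (x + b))"
      using W_decomp[OF adm c0 _ n1, of "x + b"] abx by simp
    show ?thesis unfolding mech_def Wd
      by (simp add: sum_distrib_left sum.distrib sum_subtractf algebra_simps)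
  qed
  also have "\<dots> \<le> (\<Sum>k=1..n. eta c n W k * (?rs * Vc c k (a + x)))"
  proof (rule sum_mono)
    fix k assume k: "k \<in> {1..n}"
    have k1: "k \<ge> 1" using k by simp
    have "Vc c k (x + b) + real a * Fc c k (a + x) - real b * Fc c k (Suc (a + x)) \<le> rho c k * Vc c k (a + x)"
      by (rule basis_ineq[OF k1 c0 c1])
    also have "\<dots> \<le> ?rs * Vc c k (a + x)"
      using rho_facts(3)[OF k1 c0 c1] V_nonneg[OF k1 c0 c1] by (intro mult_right_mono) auto
    finally show "eta c n W k * (Vc c k (x + b) + real a * Fc c k (a + x) - real b * Fc c k (Suc (a + x)))
        \<le> eta c n W k * (?rs * Vc c k (a + x))"
      using eta_nonneg[OF adm c0] k by (intro mult_left_mono) auto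
  qed
  also have "\<dots> = ?rs * W (a + x)"
  proof -
    have Wd: "W (a + x) = (\<Sum>k=1..n. eta c n W k * Vc c k (a + x))"
      using W_decomp[OF adm c0 _ n1, of "a + x"] abx by simp
    show ?thesis unfolding Wd by (simp add: sum_distrib_left algebra_simps)
  qed
  finally show ?thesis .
qed


lemma double_count:
  fixes m :: nat
  assumes "finite R" "\<And>i. i < m \<Longrightarrow> S i \<subseteq> R"
  shows "(\<Sum>i<m. \<Sum>r\<in>S i. g i r) = (\<Sum>r\<in>R. \<Sum>i\<in>{i. i < m \<and> r \<in> S i}. g i r)"
proof -
  have "(\<Sum>i<m. \<Sum>r\<in>S i. g i r) = (\<Sum>i<m. \<Sum>r\<in>{r. r \<in> R \<and> r \<in> S i}. g i r)"
  proof (rule sum.cong[OF refl])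
    fix i assume "i \<in> {..<m}"
    hence "S i = {r. r \<in> R \<and> r \<in> S i}" using assms(2) by auto
    thus "(\<Sum>r\<in>S i. g i r) = (\<Sum>r\<in>{r. r \<in> R \<and> r \<in> S i}. g i r)" by simp
  qed
  also have "\<dots> = (\<Sum>r\<in>R. \<Sum>i\<in>{i. i \<in> {..<m} \<and> r \<in> S i}. g i r)"
    by (rule sum.swap_restrict) (simp_all add: assms(1))
  also have "\<dots> = (\<Sum>r\<in>R. \<Sum>i\<in>{i. i < m \<and> r \<in> S i}. g i r)" by simp
  finally show ?thesis .
qed

lemma load_upd:
  assumes "i < m" "r \<in> S"
  shows "load m (a(i := S)) r = (if r \<in> a i then load m a r else Suc (load m a r))"
proof -
  have e: "{j. j < m \<and> r \<in> (a(i := S)) j} = insert i {j. j < m \<and> r \<in> a j}"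
    using assms by auto
  have fin: "finite {j. j < m \<and> r \<in> a j}" by simp
  show ?thesis
  proof (cases "r \<in> a i")
    case True
    hence "insert i {j. j < m \<and> r \<in> a j} = {j. j < m \<and> r \<in> a j}" using assms by auto
    thus ?thesis unfolding load_def e using True by simp
  next
    case False
    hence "i \<notin> {j. j < m \<and> r \<in> a j}" by simp
    thus ?thesis unfolding load_def e using False fin by simp
  qed
qed

lemma welfare_R:
  assumes "finite R" "\<And>i. i < m \<Longrightarrow> a i \<subseteq> R" "\<And>r. r \<in> R \<Longrightarrow> Wr r 0 = 0"
  shows "welfare m Wr a = (\<Sum>r\<in>R. Wr r (load m a r))"
  unfolding welfare_def
proof (rule sum.mono_neutral_left)
  show "finite R" by (rule assms(1))
  show "(\<Union>i<m. a i) \<subseteq> R" using assms(2) by auto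
  show "\<forall>r\<in>R - (\<Union>i<m. a i). Wr r (load m a r) = 0"
  proof
    fix r assume r: "r \<in> R - (\<Union>i<m. a i)"
    hence "{i. i < m \<and> r \<in> a i} = {}" by auto
    hence "load m a r = 0" unfolding load_def by simp
    thus "Wr r (load m a r) = 0" using assms(3) r by simp
  qed
qed

lemma card_split3:
  fixes P Q :: "nat \<Rightarrow> bool"
  shows "card {i. i < m \<and> P i} = card {i. i < m \<and> P i \<and> \<not> Q i} + card {i. i < m \<and> P i \<and> Q i}"
proof -
  have "{i. i < m \<and> P i} = {i. i < m \<and> P i \<and> \<not> Q i} \<union> {i. i < m \<and> P i \<and> Q i}" by auto
  moreover have "{i. i < m \<and> P i \<and> \<not> Q i} \<inter> {i. i < m \<and> P i \<and> Q i} = {}" by auto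
  ultimately show ?thesis by (simp add: card_Un_disjoint)
qed

lemma card3_le:
  fixes P Q :: "nat \<Rightarrow> bool"
  shows "card {i. i < m \<and> P i \<and> \<not> Q i} + card {i. i < m \<and> P i \<and> Q i} + card {i. i < m \<and> \<not> P i \<and> Q i} \<le> m"
proof -
  let ?A = "{i. i < m \<and> P i \<and> \<not> Q i}" and ?B = "{i. i < m \<and> P i \<and> Q i}" and ?C = "{i. i < m \<and> \<not> P i \<and> Q i}"
  have "card (?A \<union> ?B \<union> ?C) = card ?A + card ?B + card ?C"
    by (subst card_Un_disjoint, auto)+
  moreover have "card (?A \<union> ?B \<union> ?C) \<le> card {..<m}" by (rule card_mono) auto
  ultimately show ?thesis by simp
qed

lemma sum_if_card:
  assumes "finite S"
  shows "(\<Sum>i\<in>S. if P i then (x::real) else y) = real (card {i\<in>S. P i}) * x + real (card {i\<in>S. \<not> P i}) * y"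
proof -
  have "(\<Sum>i\<in>S. if P i then x else y) = (\<Sum>i\<in>S \<inter> {i. P i}. x) + (\<Sum>i\<in>S \<inter> - {i. P i}. y)"
    by (rule sum.If_cases[OF assms])
  moreover have "S \<inter> {i. P i} = {i\<in>S. P i}" "S \<inter> - {i. P i} = {i\<in>S. \<not> P i}" by auto
  ultimately show ?thesis by simp
qed

theorem partA:
  fixes c :: real
  assumes c0: "0 < c" and c1: "c \<le> 1" and n2: "2 \<le> n" and mn: "m \<le> n"
    and game: "is_game m R A" and adm: "\<forall>r\<in>R. admissible c n (Wr r)"
    and ne: "is_NE m A (\<lambda>r. mech c n (Wr r)) a" and a': "a' \<in> allocs m A"
  shows "(1 - c / exp 1) * welfare m Wr a' \<le> welfare m Wr a"
proof -
  define F where "F r = mech c n (Wr r)" for r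
  have finR: "finite R" using game unfolding is_game_def by simp
  have aA: "\<And>i. i < m \<Longrightarrow> a i \<in> A i" using ne unfolding is_NE_def allocs_def by auto
  have a'A: "\<And>i. i < m \<Longrightarrow> a' i \<in> A i" using a' unfolding allocs_def by auto
  have AR: "\<And>i. i < m \<Longrightarrow> A i \<subseteq> Pow R" using game unfolding is_game_def by simp
  have aR: "\<And>i. i < m \<Longrightarrow> a i \<subseteq> R" using aA AR by blast
  have a'R: "\<And>i. i < m \<Longrightarrow> a' i \<subseteq> R" using a'A AR by blast
  have W0: "\<And>r. r \<in> R \<Longrightarrow> Wr r 0 = 0" using adm unfolding admissible_def by auto
  have n1: "n \<ge> 1" using n2 by simp
  define L where "L r = load m a r" for r
  define CA where "CA r = card {i. i < m \<and> r \<in> a i \<and> r \<notin> a' i}" for r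
  define CX where "CX r = card {i. i < m \<and> r \<in> a i \<and> r \<in> a' i}" for r
  define CB where "CB r = card {i. i < m \<and> r \<notin> a i \<and> r \<in> a' i}" for r
  have LA: "L r = CA r + CX r" for r
    unfolding L_def load_def CA_def CX_def by (rule card_split3)
  have LA': "load m a' r = CX r + CB r" for r
  proof -
    have "load m a' r = card {i. i < m \<and> r \<in> a' i \<and> \<not> r \<in> a i} + card {i. i < m \<and> r \<in> a' i \<and> r \<in> a i}"
      unfolding load_def by (rule card_split3)
    moreover have "{i. i < m \<and> r \<in> a' i \<and> \<not> r \<in> a i} = {i. i < m \<and> r \<notin> a i \<and> r \<in> a' i}"
      "{i. i < m \<and> r \<in> a' i \<and> r \<in> a i} = {i. i < m \<and> r \<in> a i \<and> r \<in> a' i}" by auto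
    ultimately show ?thesis unfolding CX_def CB_def by simp
  qed
  have Cle: "CA r + CX r + CB r \<le> n" for r
    using card3_le[of m "\<lambda>i. r \<in> a i" "\<lambda>i. r \<in> a' i"] mn unfolding CA_def CX_def CB_def by simp
  have U: "(\<Sum>i<m. utility m F a i) = (\<Sum>r\<in>R. real (L r) * F r (L r))"
  proof -
    have "(\<Sum>i<m. utility m F a i) = (\<Sum>i<m. \<Sum>r\<in>a i. F r (L r))"
      unfolding utility_def L_def by simp
    also have "\<dots> = (\<Sum>r\<in>R. \<Sum>i\<in>{i. i < m \<and> r \<in> a i}. F r (L r))"
      by (rule double_count[OF finR aR])
    also have "\<dots> = (\<Sum>r\<in>R. real (L r) * F r (L r))"
      unfolding L_def load_def by simp
    finally show ?thesis .
  qed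
  have D: "(\<Sum>i<m. utility m F (a(i := a' i)) i) = (\<Sum>r\<in>R. real (CX r) * F r (L r) + real (CB r) * F r (Suc (L r)))"
  proof -
    have "(\<Sum>i<m. utility m F (a(i := a' i)) i)
        = (\<Sum>i<m. \<Sum>r\<in>a' i. if r \<in> a i then F r (L r) else F r (Suc (L r)))"
    proof (rule sum.cong[OF refl])
      fix i assume i: "i \<in> {..<m}"
      show "utility m F (a(i := a' i)) i = (\<Sum>r\<in>a' i. if r \<in> a i then F r (L r) else F r (Suc (L r)))"
        unfolding utility_def using i load_upd[of i m _ "a' i" a] by (intro sum.cong) (auto simp: L_def)
    qed
    also have "\<dots> = (\<Sum>r\<in>R. \<Sum>i\<in>{i. i < m \<and> r \<in> a' i}. if r \<in> a i then F r (L r) else F r (Suc (L r)))"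
      by (rule double_count[OF finR a'R])
    also have "\<dots> = (\<Sum>r\<in>R. real (CX r) * F r (L r) + real (CB r) * F r (Suc (L r)))"
    proof (rule sum.cong[OF refl])
      fix r assume "r \<in> R"
      have "(\<Sum>i\<in>{i. i < m \<and> r \<in> a' i}. if r \<in> a i then F r (L r) else F r (Suc (L r)))
          = real (card {i\<in>{i. i < m \<and> r \<in> a' i}. r \<in> a i}) * F r (L r)
            + real (card {i\<in>{i. i < m \<and> r \<in> a' i}. r \<notin> a i}) * F r (Suc (L r))"
        by (rule sum_if_card) simp
      moreover have "{i\<in>{i. i < m \<and> r \<in> a' i}. r \<in> a i} = {i. i < m \<and> r \<in> a i \<and> r \<in> a' i}"
        "{i\<in>{i. i < m \<and> r \<in> a' i}. r \<notin> a i} = {i. i < m \<and> r \<notin> a i \<and> r \<in> a' i}" by auto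
      ultimately show "(\<Sum>i\<in>{i. i < m \<and> r \<in> a' i}. if r \<in> a i then F r (L r) else F r (Suc (L r)))
          = real (CX r) * F r (L r) + real (CB r) * F r (Suc (L r))"
        unfolding CX_def CB_def by simp
    qed
    finally show ?thesis .
  qed
  have NEs: "(\<Sum>i<m. utility m F (a(i := a' i)) i) \<le> (\<Sum>i<m. utility m F a i)"
  proof (rule sum_mono)
    fix i assume "i \<in> {..<m}"
    thus "utility m F (a(i := a' i)) i \<le> utility m F a i"
      using ne a'A unfolding is_NE_def F_def by auto
  qed
  let ?rs = "inverse (1 - c / exp 1)"
  have wa': "welfare m Wr a' = (\<Sum>r\<in>R. Wr r (CX r + CB r))"
    using welfare_R[of R m a' Wr] finR a'R W0 LA' by simp
  have wa: "welfare m Wr a = (\<Sum>r\<in>R. Wr r (L r))"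
    using welfare_R[of R m a Wr] finR aR W0 unfolding L_def by simp
  have "welfare m Wr a' \<le> (\<Sum>r\<in>R. ?rs * Wr r (L r) - real (CA r) * F r (L r) + real (CB r) * F r (Suc (L r)))"
    unfolding wa'
  proof (rule sum_mono)
    fix r assume r: "r \<in> R"
    have "Wr r (CX r + CB r) + real (CA r) * mech c n (Wr r) (CA r + CX r) - real (CB r) * mech c n (Wr r) (Suc (CA r + CX r))
        \<le> ?rs * Wr r (CA r + CX r)"
      using combined[of c n "Wr r" "CA r" "CX r" "CB r"] adm r c0 c1 n1 Cle by simp
    thus "Wr r (CX r + CB r) \<le> ?rs * Wr r (L r) - real (CA r) * F r (L r) + real (CB r) * F r (Suc (L r))"
      unfolding F_def LA by simp
  qed
  also have "\<dots> = ?rs * welfare m Wr a + ((\<Sum>i<m. utility m F (a(i := a' i)) i) - (\<Sum>i<m. utility m F a i))"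
    unfolding wa D U LA by (simp add: sum.distrib sum_subtractf sum_distrib_left algebra_simps)
  also have "\<dots> \<le> ?rs * welfare m Wr a" using NEs by simp
  finally have w: "welfare m Wr a' \<le> ?rs * welfare m Wr a" .
  have pos: "1 - c / exp 1 > 0"
    using e_gt2 c1 c0 by (smt (verit, ccfv_SIG) divide_less_eq_1 exp_gt_zero)
  have "(1 - c / exp 1) * welfare m Wr a' \<le> (1 - c / exp 1) * (?rs * welfare m Wr a)"
    using w pos by (intro mult_left_mono) auto
  also have "\<dots> = welfare m Wr a" using pos by simp
  finally show ?thesis .
qed


definition enc :: "nat \<Rightarrow> nat \<Rightarrow> nat \<Rightarrow> nat" where
  "enc x y z = prod_encode (x, prod_encode (y, z))"

lemma enc_eq[simp]: "enc x y z = enc x' y' z' \<longleftrightarrow> x = x' \<and> y = y' \<and> z = z'"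
  by (simp add: enc_def prod_encode_eq)

lemma inj_enc2: "inj_on (\<lambda>(s, q). enc x s q) X"
  by (auto simp: inj_on_def)

lemma inj_enc1: "inj_on (\<lambda>q. enc x s q) X"
  by (auto simp: inj_on_def)

lemma card_neq: "s < m \<Longrightarrow> card {i. i < m \<and> i \<noteq> s} = m - 1"
proof -
  assume "s < m"
  have "{i. i < m \<and> i \<noteq> s} = {..<m} - {s}" by auto
  thus ?thesis using \<open>s < m\<close> by simp
qed

context
  fixes j t K :: nat
  assumes j1: "j \<ge> 1"
begin

definition "ne i = (\<lambda>(s, q). enc 0 s q) ` ({s. s < Suc j \<and> s \<noteq> i} \<times> {..<t})"
definition "shs i = (\<lambda>q. enc 0 i q) ` {..<t}"
definition "prv i = (\<lambda>p. enc 2 i p) ` {..<K}"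
definition "op i = shs i \<union> prv i"
definition "Sh = (\<lambda>(s, q). enc 0 s q) ` ({..<Suc j} \<times> {..<t})"
definition "Pr = (\<lambda>(s, q). enc 2 s q) ` ({..<Suc j} \<times> {..<K})"
definition "RR = Sh \<union> Pr"
definition "AA i = {ne i, op i}"
definition "na i = (if i < Suc j then ne i else {})"
definition "oa i = (if i < Suc j then op i else {})"

lemma mem_ne: "enc x s q \<in> ne i \<longleftrightarrow> x = 0 \<and> s < Suc j \<and> s \<noteq> i \<and> q < t"
  unfolding ne_def by auto
lemma mem_op: "enc x s q \<in> op i \<longleftrightarrow> (x = 0 \<and> s = i \<and> q < t) \<or> (x = 2 \<and> s = i \<and> q < K)"
  unfolding op_def shs_def prv_def by auto

lemma load_na: "s < Suc j \<Longrightarrow> q < t \<Longrightarrow> load (Suc j) na (enc 0 s q) = j"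
proof -
  assume a: "s < Suc j" "q < t"
  have "{i. i < Suc j \<and> enc 0 s q \<in> na i} = {i. i < Suc j \<and> i \<noteq> s}"
    using a by (auto simp: na_def mem_ne)
  thus ?thesis unfolding load_def using card_neq[OF a(1)] by simp
qed

lemma load_oa: "s < Suc j \<Longrightarrow> load (Suc j) oa (enc x s q) = (if (x = 0 \<and> q < t) \<or> (x = 2 \<and> q < K) then 1 else 0)"
proof -
  assume a: "s < Suc j"
  have "{i. i < Suc j \<and> enc x s q \<in> oa i} = (if (x = 0 \<and> q < t) \<or> (x = 2 \<and> q < K) then {s} else {})"
    using a by (auto simp: oa_def mem_op)
  thus ?thesis unfolding load_def by simp
qed

lemma load_dev0: "i < Suc j \<Longrightarrow> q < t \<Longrightarrow> load (Suc j) (na(i := op i)) (enc 0 i q) = Suc j"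
proof -
  assume a: "i < Suc j" "q < t"
  have "{i'. i' < Suc j \<and> enc 0 i q \<in> (na(i := op i)) i'} = {..<Suc j}"
    using a by (auto simp: na_def mem_ne mem_op)
  thus ?thesis unfolding load_def by simp
qed

lemma load_dev1: "i < Suc j \<Longrightarrow> p < K \<Longrightarrow> load (Suc j) (na(i := op i)) (enc 2 i p) = 1"
proof -
  assume a: "i < Suc j" "p < K"
  have "{i'. i' < Suc j \<and> enc 2 i p \<in> (na(i := op i)) i'} = {i}"
    using a by (auto simp: na_def mem_ne mem_op)
  thus ?thesis unfolding load_def by simp
qed

lemma util_na: "i < Suc j \<Longrightarrow> utility (Suc j) (\<lambda>r. f) na i = real j * real t * f j"
proof -
  assume i: "i < Suc j"
  have "utility (Suc j) (\<lambda>r. f) na i = (\<Sum>r\<in>ne i. f (load (Suc j) na r))"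
    unfolding utility_def na_def using i by simp
  also have "\<dots> = (\<Sum>x\<in>{s. s < Suc j \<and> s \<noteq> i} \<times> {..<t}. f (load (Suc j) na ((\<lambda>(s, q). enc 0 s q) x)))"
    unfolding ne_def by (rule sum.reindex[OF inj_enc2, unfolded comp_def])
  also have "\<dots> = (\<Sum>x\<in>{s. s < Suc j \<and> s \<noteq> i} \<times> {..<t}. f j)"
    by (rule sum.cong) (auto simp: load_na)
  also have "\<dots> = real (card ({s. s < Suc j \<and> s \<noteq> i} \<times> {..<t})) * f j" by simp
  also have "card ({s. s < Suc j \<and> s \<noteq> i} \<times> {..<t}) = j * t"
    using card_neq[OF i] by (simp add: card_cartesian_product)
  finally show ?thesis by simp
qed

lemma util_dev: "i < Suc j \<Longrightarrow> utility (Suc j) (\<lambda>r. f) (na(i := op i)) i = real t * f (Suc j) + real K * f 1"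
proof -
  assume i: "i < Suc j"
  have d: "shs i \<inter> prv i = {}" unfolding shs_def prv_def by auto
  have "utility (Suc j) (\<lambda>r. f) (na(i := op i)) i = (\<Sum>r\<in>shs i \<union> prv i. f (load (Suc j) (na(i := op i)) r))"
    unfolding utility_def op_def by simp
  also have "\<dots> = (\<Sum>r\<in>shs i. f (load (Suc j) (na(i := op i)) r)) + (\<Sum>r\<in>prv i. f (load (Suc j) (na(i := op i)) r))"
    by (rule sum.union_disjoint) (auto simp: shs_def prv_def d)
  also have "(\<Sum>r\<in>shs i. f (load (Suc j) (na(i := op i)) r)) = (\<Sum>q<t. f (load (Suc j) (na(i := op i)) (enc 0 i q)))"
    unfolding shs_def by (rule sum.reindex[OF inj_enc1, unfolded comp_def])
  also have "\<dots> = (\<Sum>q<t. f (Suc j))" by (rule sum.cong) (auto simp: load_dev0[OF i])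
  also have "(\<Sum>r\<in>prv i. f (load (Suc j) (na(i := op i)) r)) = (\<Sum>p<K. f (load (Suc j) (na(i := op i)) (enc 2 i p)))"
    unfolding prv_def by (rule sum.reindex[OF inj_enc1, unfolded comp_def])
  also have "\<dots> = (\<Sum>p<K. f 1)" by (rule sum.cong) (auto simp: load_dev1[OF i])
  finally have fin: "utility (Suc j) (\<lambda>r. f) (na(i := op i)) i = (\<Sum>q<t. f (Suc j)) + (\<Sum>p<K. f 1)" .
  have s1: "(\<Sum>q<t. f (Suc j)) = real t * f (Suc j)" by simp
  have s2: "(\<Sum>p<K. f 1) = real K * f 1" by simp
  show ?thesis using fin s1 s2 by linarith
qed

lemma union_na: "(\<Union>i<Suc j. na i) = Sh"
proof
  show "(\<Union>i<Suc j. na i) \<subseteq> Sh" unfolding na_def ne_def Sh_def by auto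
  show "Sh \<subseteq> (\<Union>i<Suc j. na i)"
  proof
    fix r assume "r \<in> Sh"
    then obtain s q where r: "r = enc 0 s q" "s < Suc j" "q < t" unfolding Sh_def by auto
    define i :: nat where "i = (if s = 0 then 1 else 0)"
    have "i < Suc j" "i \<noteq> s" using j1 by (auto simp: i_def)
    hence "r \<in> na i" using r by (simp add: na_def mem_ne)
    thus "r \<in> (\<Union>i<Suc j. na i)" using \<open>i < Suc j\<close> by auto
  qed
qed

lemma union_oa: "(\<Union>i<Suc j. oa i) = Sh \<union> Pr"
  unfolding oa_def op_def shs_def prv_def Sh_def Pr_def by auto

lemma welfare_na: "welfare (Suc j) (\<lambda>r. Wf) na = real (Suc j) * real t * Wf j"
proof -
  have "welfare (Suc j) (\<lambda>r. Wf) na = (\<Sum>r\<in>Sh. Wf (load (Suc j) na r))"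
    unfolding welfare_def union_na ..
  also have "\<dots> = (\<Sum>x\<in>{..<Suc j} \<times> {..<t}. Wf (load (Suc j) na ((\<lambda>(s, q). enc 0 s q) x)))"
    unfolding Sh_def by (rule sum.reindex[OF inj_enc2, unfolded comp_def])
  also have "\<dots> = (\<Sum>x\<in>{..<Suc j} \<times> {..<t}. Wf j)"
    by (rule sum.cong) (auto simp: load_na)
  finally show ?thesis by (simp add: card_cartesian_product algebra_simps)
qed

lemma welfare_oa: "welfare (Suc j) (\<lambda>r. Wf) oa = real (Suc j) * (real t + real K) * Wf 1"
proof -
  have d: "Sh \<inter> Pr = {}" unfolding Sh_def Pr_def by auto
  have "welfare (Suc j) (\<lambda>r. Wf) oa = (\<Sum>r\<in>Sh \<union> Pr. Wf (load (Suc j) oa r))"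
    unfolding welfare_def union_oa ..
  also have "\<dots> = (\<Sum>r\<in>Sh. Wf (load (Suc j) oa r)) + (\<Sum>r\<in>Pr. Wf (load (Suc j) oa r))"
    by (rule sum.union_disjoint) (auto simp: Sh_def Pr_def d)
  also have "(\<Sum>r\<in>Sh. Wf (load (Suc j) oa r)) = (\<Sum>x\<in>{..<Suc j} \<times> {..<t}. Wf (load (Suc j) oa ((\<lambda>(s, q). enc 0 s q) x)))"
    unfolding Sh_def by (rule sum.reindex[OF inj_enc2, unfolded comp_def])
  also have "\<dots> = (\<Sum>x\<in>{..<Suc j} \<times> {..<t}. Wf 1)"
    by (rule sum.cong) (auto simp: load_oa)
  also have "(\<Sum>r\<in>Pr. Wf (load (Suc j) oa r)) = (\<Sum>x\<in>{..<Suc j} \<times> {..<K}. Wf (load (Suc j) oa ((\<lambda>(s, q). enc 2 s q) x)))"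
    unfolding Pr_def by (rule sum.reindex[OF inj_enc2, unfolded comp_def])
  also have "\<dots> = (\<Sum>x\<in>{..<Suc j} \<times> {..<K}. Wf 1)"
    by (rule sum.cong) (auto simp: load_oa)
  finally show ?thesis by (simp add: card_cartesian_product algebra_simps)
qed

lemma cyclic_game:
  assumes cond: "real t * f (Suc j) + real K * f 1 \<le> real j * real t * f j"
  shows "is_game (Suc j) RR AA \<and> is_NE (Suc j) AA (\<lambda>r. f) na \<and> oa \<in> allocs (Suc j) AA
    \<and> welfare (Suc j) (\<lambda>r. Wf) na = real (Suc j) * real t * Wf j
    \<and> welfare (Suc j) (\<lambda>r. Wf) oa = real (Suc j) * (real t + real K) * Wf 1"
proof (intro conjI welfare_na welfare_oa)
  show "is_game (Suc j) RR AA"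
    unfolding is_game_def RR_def AA_def Sh_def Pr_def ne_def op_def shs_def prv_def by auto
  have na_all: "na \<in> allocs (Suc j) AA" unfolding allocs_def na_def AA_def by auto
  show "oa \<in> allocs (Suc j) AA" unfolding allocs_def oa_def AA_def by auto
  show "is_NE (Suc j) AA (\<lambda>r. f) na"
    unfolding is_NE_def
  proof (intro conjI na_all allI impI ballI)
    fix i ai assume i: "i < Suc j" and ai: "ai \<in> AA i"
    show "utility (Suc j) (\<lambda>r. f) (na(i := ai)) i \<le> utility (Suc j) (\<lambda>r. f) na i"
    proof (cases "ai = ne i")
      case True
      hence "na(i := ai) = na" using i by (auto simp: na_def fun_eq_iff)
      thus ?thesis by simp
    next
      case False
      hence "ai = op i" using ai by (auto simp: AA_def)
      thus ?thesis using util_dev[OF i, of f] util_na[OF i, of f] cond by simp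
    qed
  qed
qed

end


context
  fixes N K :: nat
  assumes N1: "N \<ge> 1"
begin

definition "sne i = {enc 0 0 0}"
definition "sop i = (\<lambda>p. enc 2 i p) ` {..<K}"
definition "SR = {enc 0 0 0} \<union> (\<lambda>(s, q). enc 2 s q) ` ({..<N} \<times> {..<K})"
definition "SA i = {sne i, sop i}"
definition "sa i = (if i < N then sne i else {})"
definition "sa' i = (if i < N then sop i else {})"

lemma sload_a: "load N sa (enc 0 0 0) = N"
proof -
  have "{i. i < N \<and> enc 0 0 0 \<in> sa i} = {..<N}" by (auto simp: sa_def sne_def)
  thus ?thesis unfolding load_def by simp
qed

lemma sload_dev: "i < N \<Longrightarrow> p < K \<Longrightarrow> load N (sa(i := sop i)) (enc 2 i p) = 1"
proof -
  assume a: "i < N" "p < K"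
  have "{i'. i' < N \<and> enc 2 i p \<in> (sa(i := sop i)) i'} = {i}"
    using a by (auto simp: sa_def sne_def sop_def)
  thus ?thesis unfolding load_def by simp
qed

lemma sload_a': "i < N \<Longrightarrow> p < K \<Longrightarrow> load N sa' (enc 2 i p) = 1"
proof -
  assume a: "i < N" "p < K"
  have "{i'. i' < N \<and> enc 2 i p \<in> sa' i'} = {i}"
    using a by (auto simp: sa'_def sop_def)
  thus ?thesis unfolding load_def by simp
qed

lemma star_game:
  assumes cond: "real K * f 1 \<le> f N"
  shows "is_game N SR SA \<and> is_NE N SA (\<lambda>r. f) sa \<and> sa' \<in> allocs N SA
    \<and> welfare N (\<lambda>r. Wf) sa = Wf N
    \<and> welfare N (\<lambda>r. Wf) sa' = real N * real K * Wf 1"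
proof (intro conjI)
  show "is_game N SR SA" unfolding is_game_def SR_def SA_def sne_def sop_def by auto
  have sa_all: "sa \<in> allocs N SA" unfolding allocs_def sa_def SA_def by auto
  show "sa' \<in> allocs N SA" unfolding allocs_def sa'_def SA_def by auto
  show "is_NE N SA (\<lambda>r. f) sa"
    unfolding is_NE_def
  proof (intro conjI sa_all allI impI ballI)
    fix i ai assume i: "i < N" and ai: "ai \<in> SA i"
    have ua: "utility N (\<lambda>r. f) sa i = f N"
      unfolding utility_def using i sload_a by (simp add: sa_def sne_def)
    show "utility N (\<lambda>r. f) (sa(i := ai)) i \<le> utility N (\<lambda>r. f) sa i"
    proof (cases "ai = sne i")
      case True
      hence "sa(i := ai) = sa" using i by (auto simp: sa_def fun_eq_iff)
      thus ?thesis by simp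
    next
      case False
      hence e: "ai = sop i" using ai by (auto simp: SA_def)
      have "utility N (\<lambda>r. f) (sa(i := ai)) i = (\<Sum>p<K. f (load N (sa(i := sop i)) (enc 2 i p)))"
        unfolding utility_def e sop_def by (simp add: sum.reindex[OF inj_enc1])
      also have "\<dots> = (\<Sum>p<K. f 1)" by (rule sum.cong) (auto simp: sload_dev[OF i])
      also have "\<dots> = real K * f 1" by simp
      finally show ?thesis using ua cond by simp
    qed
  qed
  show "welfare N (\<lambda>r. Wf) sa = Wf N"
  proof -
    have "0 < N" using N1 by simp
    hence "(\<Union>i<N. sa i) = {enc 0 0 0}" by (auto simp: sa_def sne_def)
    thus ?thesis unfolding welfare_def using sload_a by simp
  qed
  show "welfare N (\<lambda>r. Wf) sa' = real N * real K * Wf 1"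
  proof -
    have u: "(\<Union>i<N. sa' i) = (\<lambda>(s, q). enc 2 s q) ` ({..<N} \<times> {..<K})" by (auto simp: sa'_def sop_def)
    have "welfare N (\<lambda>r. Wf) sa' = (\<Sum>x\<in>{..<N} \<times> {..<K}. Wf (load N sa' ((\<lambda>(s, q). enc 2 s q) x)))"
      unfolding welfare_def u by (rule sum.reindex[OF inj_enc2, unfolded comp_def])
    also have "\<dots> = (\<Sum>x\<in>{..<N} \<times> {..<K}. Wf 1)" by (rule sum.cong) (auto simp: sload_a')
    finally show ?thesis by (simp add: card_cartesian_product)
  qed
qed

end


definition W0 :: "real \<Rightarrow> nat \<Rightarrow> real" where
  "W0 c x = (if x = 0 then 0 else (1 - c) * real x + c)"

lemma W0_1[simp]: "W0 c 1 = 1" by (simp add: W0_def)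

lemma W0_pos: "0 < c \<Longrightarrow> c \<le> 1 \<Longrightarrow> x \<ge> 1 \<Longrightarrow> W0 c x \<ge> 1"
proof -
  assume a: "0 < c" "c \<le> 1" "x \<ge> 1"
  have "(1 - c) * 1 \<le> (1 - c) * real x" using a by (intro mult_left_mono) auto
  thus ?thesis using a unfolding W0_def by simp
qed

lemma adm_W0:
  assumes c0: "0 < c" and c1: "c \<le> 1" and m1: "m \<ge> 1"
  shows "admissible c m (W0 c)"
  unfolding admissible_def
proof (intro conjI allI impI)
  show "W0 c 0 = 0" by (simp add: W0_def)
  fix x :: nat
  show "x \<ge> 1 \<Longrightarrow> W0 c x > 0" using W0_pos[OF c0 c1, of x] by simp
  have e1: "W0 c (x + 2) - W0 c (x + 1) = 1 - c" by (simp add: W0_def algebra_simps)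
  have e2: "W0 c (x + 1) - W0 c x = (if x = 0 then 1 else 1 - c)" by (simp add: W0_def algebra_simps)
  show "W0 c (x + 2) - W0 c (x + 1) \<le> W0 c (x + 1) - W0 c x"
    unfolding e1 e2 using c0 by simp
next
  show "mono (W0 c)"
  proof (rule monoI)
    fix x y :: nat assume xy: "x \<le> y"
    show "W0 c x \<le> W0 c y"
    proof (cases "x = 0")
      case True
      then show ?thesis using W0_pos[OF c0 c1, of y] by (cases "y = 0") (auto simp: W0_def)
    next
      case False
      have "(1 - c) * real x \<le> (1 - c) * real y" using xy c1 by (intro mult_left_mono) auto
      then show ?thesis using False xy by (auto simp: W0_def)
    qed
  qed
  show "1 - (W0 c m - W0 c (m - 1)) / W0 c 1 \<le> c"
  proof (cases "m = 1")
    case True then show ?thesis using c0 by (simp add: W0_def)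
  next
    case False
    hence "m \<ge> 2" using m1 by simp
    hence "W0 c m - W0 c (m - 1) = 1 - c" by (auto simp: W0_def of_nat_diff algebra_simps)
    thus ?thesis by (simp add: W0_def)
  qed
qed

lemma aux_fact: "(F::real) > 0 \<Longrightarrow> J \<ge> 0 \<Longrightarrow> 1 - 1/F + J/(F*(J+1)) = 1 - 1/(F*(J+1))"
proof -
  assume a: "F > 0" "J \<ge> 0"
  define G where "G = F * (J + 1)"
  have d: "G > 0" using a by (simp add: G_def)
  have e: "1/F = (J+1)/G" using a by (simp add: G_def)
  have "1 - (J+1)/G + J/G = 1 - 1/G" using d by (simp add: field_simps)
  thus ?thesis unfolding e G_def by simp
qed
lemma sum_im1: "(\<Sum>i=1..j. (real i - 1) / fact i) = 1 - 1 / fact j"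
proof (induction j)
  case 0 then show ?case by simp
next
  case (Suc j)
  have "(\<Sum>i=1..Suc j. (real i - 1) / fact i) = 1 - 1 / fact j + real j / fact (Suc j)"
    using Suc by simp
  also have "\<dots> = 1 - 1 / (fact j * (real j + 1))"
    using aux_fact[of "fact j" "real j"] by (simp add: algebra_simps)
  also have "\<dots> = 1 - 1 / fact (Suc j)" by (simp add: algebra_simps)
  finally show ?case .
qed

lemma sum_inv_fact: "(\<Sum>i=1..j. 1 / fact i) \<le> exp 1 - (1::real)"
proof -
  have "Sl 1 (Suc j) \<le> exp 1" using Sl_le_exp[of 1 "Suc j"] by simp
  moreover have "Sl 1 (Suc j) = 1 + (\<Sum>i=1..j. 1 / fact i)"
  proof -
    have "Sl 1 (Suc j) = (\<Sum>i\<le>j. 1 / fact i)" unfolding Sl_def mm_def lessThan_Suc_atMost by simp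
    also have "\<dots> = 1 + (\<Sum>i=1..j. 1 / fact i)"
      by (simp add: atMost_atLeast0 sum.atLeast_Suc_atMost)
    finally show ?thesis .
  qed
  ultimately show ?thesis by simp
qed


lemma conclude_B:
  fixes R :: "nat set"
  assumes "2 \<le> m" "is_game m R A" "is_NE m A (\<lambda>r. Mech (W0 c)) a" "a' \<in> allocs m A"
    "0 < welfare m (\<lambda>r. W0 c) a'"
    "welfare m (\<lambda>r. W0 c) a < (1 - c / exp 1 + \<epsilon>) * welfare m (\<lambda>r. W0 c) a'"
    "0 < c" "c \<le> 1"
  shows "\<exists>m (R :: nat set) A Wr. 2 \<le> m \<and> is_game m R A \<and>
          (\<forall>r\<in>R. admissible c m (Wr r)) \<and>
          (\<exists>a a'. is_NE m A (\<lambda>r. Mech (Wr r)) a \<and> a' \<in> allocs m A \<and>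
             0 < welfare m Wr a' \<and>
             welfare m Wr a < (1 - c / exp 1 + \<epsilon>) * welfare m Wr a')"
proof -
  have adm: "\<forall>r\<in>R. admissible c m (W0 c)" using adm_W0[of c m] assms by simp
  show ?thesis
    apply (rule exI[of _ m], rule exI[of _ R], rule exI[of _ A], rule exI[of _ "\<lambda>r. W0 c"])
    using adm assms by blast
qed

lemma W0_le: "0 < c \<Longrightarrow> c \<le> 1 \<Longrightarrow> N \<ge> 1 \<Longrightarrow> W0 c N \<le> real N"
proof -
  assume a: "0 < c" "c \<le> 1" "N \<ge> 1"
  have "c * 1 \<le> c * real N" using a by (intro mult_left_mono) auto
  thus ?thesis using a unfolding W0_def by (simp add: algebra_simps)
qed

theorem partB:
  fixes c :: real
  assumes c0: "0 < c" and c1: "c \<le> 1"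
  shows "\<forall>Mech :: (nat \<Rightarrow> real) \<Rightarrow> nat \<Rightarrow> real. \<forall>\<epsilon>>0.
        \<exists>m (R :: nat set) A Wr. 2 \<le> m \<and> is_game m R A \<and>
          (\<forall>r\<in>R. admissible c m (Wr r)) \<and>
          (\<exists>a a'. is_NE m A (\<lambda>r. Mech (Wr r)) a \<and> a' \<in> allocs m A \<and>
             0 < welfare m Wr a' \<and>
             welfare m Wr a < (1 - c / exp 1 + \<epsilon>) * welfare m Wr a')"
proof (intro allI impI)
  fix Mech :: "(nat \<Rightarrow> real) \<Rightarrow> nat \<Rightarrow> real" and \<epsilon> :: real
  assume ep: "\<epsilon> > 0"
  define W where "W = W0 c"
  define f where "f = Mech W"
  define ce where "ce = c / exp 1"
  have e2: "exp (1::real) > 2" by (rule e_gt2)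
  have ce0: "ce > 0" using c0 unfolding ce_def by simp
  have ceh: "ce < 1/2" unfolding ce_def using c1 e2 c0
    by (simp add: divide_simps)
  define ep' where "ep' = min \<epsilon> ce"
  have ep'0: "ep' > 0" "ep' \<le> \<epsilon>" "ep' \<le> ce" using ep ce0 unfolding ep'_def by auto
  define s where "s = 1 - ce + ep' / 2"
  have s1: "s \<le> 1" "s > 1 - ce" "s > 1/2" using ep'0 ceh unfolding s_def by auto
  have s0: "s > 0" using s1 by simp
  have W1: "W 1 = 1" unfolding W_def by (simp add: W0_def)
  have Wge: "\<And>x. x \<ge> 1 \<Longrightarrow> W x \<ge> 1" unfolding W_def using W0_pos[OF c0 c1] by simp
  have main: "\<exists>m (R::nat set) A a a'. 2 \<le> m \<and> is_game m R A \<and> is_NE m A (\<lambda>r. f) a \<and> a' \<in> allocs m A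
     \<and> 0 < welfare m (\<lambda>r. W) a' \<and> welfare m (\<lambda>r. W) a < (1 - ce + \<epsilon>) * welfare m (\<lambda>r. W) a'"
  proof (cases "f 1 \<le> 0")
    case True
    have cond: "real 0 * f (Suc 1) + real 1 * f 1 \<le> real 1 * real 0 * f 1" using True by simp
    note g = cyclic_game[where j=1 and t=0 and K=1 and f=f and Wf=W, OF _ cond]
    have "1 - ce + \<epsilon> > 0" using ceh ep by simp
    hence pos: "0 * 2 < (1 - ce + \<epsilon>) * 2" by simp
    have gg: "is_game (Suc 1) (RR 1 0 1) (AA 1 0 1)" "is_NE (Suc 1) (AA 1 0 1) (\<lambda>r. f) (na 1 0)"
      "oa 1 0 1 \<in> allocs (Suc 1) (AA 1 0 1)" "welfare (Suc 1) (\<lambda>r. W) (na 1 0) = 0 * 2"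
      "welfare (Suc 1) (\<lambda>r. W) (oa 1 0 1) = 2" using g W1 by auto
    show ?thesis
      apply (rule exI[of _ "Suc 1"], rule exI[of _ "RR 1 0 1"], rule exI[of _ "AA 1 0 1"],
             rule exI[of _ "na 1 0"], rule exI[of _ "oa 1 0 1"])
      using gg pos by simp
  next
    case f1: False
    hence f1: "f 1 > 0" by simp
    show ?thesis
    proof (cases "\<exists>j\<ge>1. real j * f j - f (Suc j) \<ge> (W j / s - 1) * f 1")
      case True
      then obtain j where j1: "j \<ge> 1" and hj: "real j * f j - f (Suc j) \<ge> (W j / s - 1) * f 1" by blast
      define \<gamma> where "\<gamma> = W j / s - 1"
      have Wj: "W j \<ge> 1" using Wge j1 by simp
      have Wjs: "W j / s \<ge> W j" using Wj s0 s1 by (simp add: divide_simps mult_left_le_one_le)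
      have g0: "\<gamma> \<ge> 0" using Wj Wjs unfolding \<gamma>_def by simp
      define t where "t = nat \<lceil>2 / ep'\<rceil> + 1"
      have tge: "real t \<ge> 2 / ep' + 1"
      proof -
        have "real (nat \<lceil>2 / ep'\<rceil>) \<ge> 2 / ep'" by linarith
        thus ?thesis unfolding t_def by simp
      qed
      have t1: "real t \<ge> 1" unfolding t_def by simp
      define K where "K = nat \<lfloor>real t * \<gamma>\<rfloor>"
      have tg0: "real t * \<gamma> \<ge> 0" using g0 by simp
      have Kle: "real K \<le> real t * \<gamma>" unfolding K_def using tg0 by linarith
      have Kgt: "real K > real t * \<gamma> - 1" unfolding K_def using tg0 by linarith
      have cond: "real t * f (Suc j) + real K * f 1 \<le> real j * real t * f j"
      proof -
        have "real K * f 1 \<le> real t * \<gamma> * f 1" using Kle f1 by (intro mult_right_mono) auto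
        also have "\<dots> = real t * (\<gamma> * f 1)" by simp
        also have "\<dots> \<le> real t * (real j * f j - f (Suc j))"
          using hj unfolding \<gamma>_def by (intro mult_left_mono) auto
        finally show ?thesis by (simp add: algebra_simps)
      qed
      note g = cyclic_game[where Wf=W, OF j1 cond]
      define X where "X = real t + real K"
      have X0: "X > 0" using t1 unfolding X_def by simp
      have Xg: "X > real t * W j / s - 1" using Kgt unfolding X_def \<gamma>_def by (simp add: algebra_simps)
      have ineq: "real t * W j < (1 - ce + \<epsilon>) * X"
      proof -
        have sp: "s + ep' / 2 > 0" using s0 ep'0 by simp
        have a1: "(s + ep' / 2) * (real t * W j / s - 1) < (s + ep' / 2) * X"
          using Xg sp by (intro mult_strict_left_mono) auto
        have a2: "(s + ep' / 2) * (real t * W j / s - 1) = real t * W j + (ep' / 2) * (real t * (W j / s)) - s - ep' / 2"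
          using s0 by (simp add: field_simps)
        have a3: "(ep' / 2) * (real t * (W j / s)) \<ge> (ep' / 2) * real t"
        proof -
          have "real t * 1 \<le> real t * (W j / s)" using Wj Wjs by (intro mult_left_mono) auto
          thus ?thesis using ep'0 by (intro mult_left_mono) auto
        qed
        have a4: "(ep' / 2) * real t \<ge> 1 + ep' / 2"
        proof -
          have "(ep' / 2) * real t \<ge> (ep' / 2) * (2 / ep' + 1)" using tge ep'0 by (intro mult_left_mono) auto
          also have "(ep' / 2) * (2 / ep' + 1) = 1 + ep' / 2" using ep'0 by (simp add: field_simps)
          finally show ?thesis .
        qed
        have a5: "(1 - ce + \<epsilon>) * X \<ge> (s + ep' / 2) * X"
          using X0 ep'0 unfolding s_def by (intro mult_right_mono) auto
        show ?thesis using a1 a2 a3 a4 a5 s1 by linarith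
      qed
      have w1: "welfare (Suc j) (\<lambda>r. W) (oa j t K) = real (Suc j) * X" using g W1 unfolding X_def by simp
      have w0: "welfare (Suc j) (\<lambda>r. W) (na j t) = real (Suc j) * (real t * W j)" using g by simp
      have "real (Suc j) * (real t * W j) < real (Suc j) * ((1 - ce + \<epsilon>) * X)"
        using ineq by (intro mult_strict_left_mono) auto
      hence lt: "welfare (Suc j) (\<lambda>r. W) (na j t) < (1 - ce + \<epsilon>) * welfare (Suc j) (\<lambda>r. W) (oa j t K)"
        unfolding w0 w1 by (simp add: algebra_simps)
      have pos: "0 < welfare (Suc j) (\<lambda>r. W) (oa j t K)" unfolding w1 using X0 by simp
      have j2: "2 \<le> Suc j" using j1 by simp
      show ?thesis using g lt pos j2 by blast
    next
      case False
      have hB: "real j * f j - f (Suc j) < (W j / s - 1) * f 1" if "j \<ge> 1" for j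
        using False that not_le by blast
      define T where "T j = (\<Sum>i=1..j. (W i / s - 1) / fact i)" for j
      define \<delta> where "\<delta> = exp 1 - (exp 1 - c) / s"
      have d0: "\<delta> > 0"
      proof -
        have "exp 1 - c < exp 1 * s" using s1(2) unfolding ce_def by (simp add: field_simps)
        hence "(exp 1 - c) / s < exp 1" using s0 by (simp add: divide_simps)
        thus ?thesis unfolding \<delta>_def by simp
      qed
      have L: "f (Suc j) \<ge> fact j * (1 - T j) * f 1" for j
      proof (induction j)
        case 0 then show ?case by (simp add: T_def)
      next
        case (Suc j)
        have Ts: "T (Suc j) = T j + (W (Suc j) / s - 1) / fact (Suc j)" unfolding T_def by simp
        have "f (Suc (Suc j)) > real (Suc j) * f (Suc j) - (W (Suc j) / s - 1) * f 1"
          using hB[of "Suc j"] by simp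
        moreover have "real (Suc j) * f (Suc j) \<ge> real (Suc j) * (fact j * (1 - T j) * f 1)"
          using Suc by (intro mult_left_mono) auto
        moreover have "real (Suc j) * (fact j * (1 - T j) * f 1) - (W (Suc j) / s - 1) * f 1
            = fact (Suc j) * (1 - T (Suc j)) * f 1"
        proof -
          have fs: "fact (Suc j) = real (Suc j) * fact j" by simp
          have nz: "fact (Suc j) \<noteq> (0::real)" by simp
          have gen: "P * (1 - T') * x - g * x = P * (1 - (T' + g / P)) * x" if "P \<noteq> 0" for P T' g x :: real
            using that by (simp add: field_simps)
          have "real (Suc j) * (fact j * (1 - T j) * f 1) - (W (Suc j) / s - 1) * f 1
              = fact (Suc j) * (1 - T j) * f 1 - (W (Suc j) / s - 1) * f 1" unfolding fs by (simp add: ac_simps)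
          also have "\<dots> = fact (Suc j) * (1 - (T j + (W (Suc j) / s - 1) / fact (Suc j))) * f 1"
            by (rule gen[OF nz])
          finally show ?thesis unfolding Ts .
        qed
        ultimately show ?case by linarith
      qed
      have Tb: "T j \<le> 1 - \<delta>" for j
      proof -
        have "T j = (\<Sum>i=1..j. ((1 - c) / s) * ((real i - 1) / fact i) + (1 / s - 1) * (1 / fact i))"
          unfolding T_def
        proof (rule sum.cong[OF refl])
          fix i assume "i \<in> {1..j}"
          hence Wi: "W i = (1 - c) * real i + c" unfolding W_def W0_def by simp
          have fi: "fact i > (0::real)" by simp
          show "(W i / s - 1) / fact i = ((1 - c) / s) * ((real i - 1) / fact i) + (1 / s - 1) * (1 / fact i)"
            unfolding Wi using s0 fi by (simp add: field_simps)
        qed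
        also have "\<dots> = ((1 - c) / s) * (1 - 1 / fact j) + (1 / s - 1) * (\<Sum>i=1..j. 1 / fact i)"
        proof -
          have gen: "(\<Sum>i\<in>S. A * X i + B * Y i) = A * (\<Sum>i\<in>S. X i) + B * (\<Sum>i\<in>S. Y i)"
            for S :: "nat set" and A B :: real and X Y
            by (simp add: sum.distrib sum_distrib_left)
          show ?thesis unfolding gen[of "(1 - c) / s" "\<lambda>i. (real i - 1) / fact i" "1 / s - 1" "\<lambda>i. 1 / fact i"] sum_im1 ..
        qed
        also have "\<dots> \<le> ((1 - c) / s) * 1 + (1 / s - 1) * (exp 1 - 1)"
        proof (rule add_mono)
          show "((1 - c) / s) * (1 - 1 / fact j) \<le> ((1 - c) / s) * 1"
            using c1 s0 by (intro mult_left_mono) auto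
          have "1 / s - 1 \<ge> 0" using s0 s1 by (simp add: divide_simps)
          thus "(1 / s - 1) * (\<Sum>i=1..j. 1 / fact i) \<le> (1 / s - 1) * (exp 1 - 1)"
            using sum_inv_fact by (intro mult_left_mono) auto
        qed
        also have "\<dots> = 1 - \<delta>" unfolding \<delta>_def using s0 by (simp add: field_simps)
        finally show ?thesis .
      qed
      define j0 where "j0 = nat \<lceil>2 / \<delta>\<rceil> + 1"
      have j0ge: "real j0 \<ge> 2 / \<delta>"
      proof -
        have "real (nat \<lceil>2 / \<delta>\<rceil>) \<ge> 2 / \<delta>" by linarith
        thus ?thesis unfolding j0_def by simp
      qed
      have fj: "fact j0 \<ge> real j0" using fact_ge_self[of j0] by (metis of_nat_fact of_nat_le_iff)
      have "fact j0 * \<delta> \<ge> 2"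
      proof -
        have "fact j0 * \<delta> \<ge> (2 / \<delta>) * \<delta>" using fj j0ge d0 by (intro mult_right_mono) auto
        thus ?thesis using d0 by simp
      qed
      have fN: "f (Suc j0) \<ge> 2 * f 1"
      proof -
        have "fact j0 * (1 - T j0) \<ge> fact j0 * \<delta>" using Tb[of j0] by (intro mult_left_mono) auto
        hence "fact j0 * (1 - T j0) \<ge> 2" using \<open>fact j0 * \<delta> \<ge> 2\<close> by linarith
        hence "fact j0 * (1 - T j0) * f 1 \<ge> 2 * f 1" using f1 by (intro mult_right_mono) auto
        thus ?thesis using L[of j0] by linarith
      qed
      define N where "N = Suc j0"
      have N2: "N \<ge> 2" unfolding N_def j0_def by simp
      have N1: "N \<ge> 1" using N2 by simp
      have cond: "real 2 * f 1 \<le> f N" using fN unfolding N_def by simp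
      note g = star_game[where Wf=W, OF N1 cond]
      have wa': "welfare N (\<lambda>r. W) (sa' N 2) = 2 * real N" using g W1 by simp
      have wa: "welfare N (\<lambda>r. W) (sa N) \<le> real N" using g W0_le[OF c0 c1 N1] unfolding W_def by simp
      have "real N < (1 - ce + \<epsilon>) * (2 * real N)"
      proof -
        have "(1 - ce + \<epsilon>) * (2 * real N) > (1/2) * (2 * real N)"
          using ceh ep N1 by (intro mult_strict_right_mono) auto
        thus ?thesis by simp
      qed
      hence lt: "welfare N (\<lambda>r. W) (sa N) < (1 - ce + \<epsilon>) * welfare N (\<lambda>r. W) (sa' N 2)"
        unfolding wa' using wa by linarith
      have pos: "0 < welfare N (\<lambda>r. W) (sa' N 2)" using wa' N1 by simp
      show ?thesis using g lt pos N2 by blast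
    qed
  qed
  then obtain m and R :: "nat set" and A a a' where h: "2 \<le> m" "is_game m R A" "is_NE m A (\<lambda>r. f) a" "a' \<in> allocs m A"
     "0 < welfare m (\<lambda>r. W) a'" "welfare m (\<lambda>r. W) a < (1 - ce + \<epsilon>) * welfare m (\<lambda>r. W) a'"
    by blast
  show "\<exists>m (R :: nat set) A Wr. 2 \<le> m \<and> is_game m R A \<and>
          (\<forall>r\<in>R. admissible c m (Wr r)) \<and>
          (\<exists>a a'. is_NE m A (\<lambda>r. Mech (Wr r)) a \<and> a' \<in> allocs m A \<and>
             0 < welfare m Wr a' \<and>
             welfare m Wr a < (1 - c / exp 1 + \<epsilon>) * welfare m Wr a')"
    by (rule conclude_B[of m R A Mech c a a' \<epsilon>]) (use h c0 c1 in \<open>simp_all add: W_def f_def ce_def\<close>)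
qed


theorem theorem1:
  fixes c :: real
  assumes "0 < c" and "c \<le> 1"
  shows
   "(\<forall>n m (R :: 'r set) A Wr. 2 \<le> n \<longrightarrow> m \<le> n \<longrightarrow> is_game m R A \<longrightarrow>
        (\<forall>r\<in>R. admissible c n (Wr r)) \<longrightarrow>
        (\<forall>a a'. is_NE m A (\<lambda>r. mech c n (Wr r)) a \<longrightarrow> a' \<in> allocs m A \<longrightarrow>
           (1 - c / exp 1) * welfare m Wr a' \<le> welfare m Wr a))
    \<and>
    (\<forall>Mech :: (nat \<Rightarrow> real) \<Rightarrow> nat \<Rightarrow> real. \<forall>\<epsilon>>0.
        \<exists>m (R :: nat set) A Wr. 2 \<le> m \<and> is_game m R A \<and>
          (\<forall>r\<in>R. admissible c m (Wr r)) \<and>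
          (\<exists>a a'. is_NE m A (\<lambda>r. Mech (Wr r)) a \<and> a' \<in> allocs m A \<and>
             0 < welfare m Wr a' \<and>
             welfare m Wr a < (1 - c / exp 1 + \<epsilon>) * welfare m Wr a'))"
proof (rule conjI)
  show "\<forall>n m (R :: 'r set) A Wr. 2 \<le> n \<longrightarrow> m \<le> n \<longrightarrow> is_game m R A \<longrightarrow>
        (\<forall>r\<in>R. admissible c n (Wr r)) \<longrightarrow>
        (\<forall>a a'. is_NE m A (\<lambda>r. mech c n (Wr r)) a \<longrightarrow> a' \<in> allocs m A \<longrightarrow>
           (1 - c / exp 1) * welfare m Wr a' \<le> welfare m Wr a)"
    using partA[OF assms] by blast
  show "\<forall>Mech :: (nat \<Rightarrow> real) \<Rightarrow> nat \<Rightarrow> real. \<forall>\<epsilon>>0.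
        \<exists>m (R :: nat set) A Wr. 2 \<le> m \<and> is_game m R A \<and>
          (\<forall>r\<in>R. admissible c m (Wr r)) \<and>
          (\<exists>a a'. is_NE m A (\<lambda>r. Mech (Wr r)) a \<and> a' \<in> allocs m A \<and>
             0 < welfare m Wr a' \<and>
             welfare m Wr a < (1 - c / exp 1 + \<epsilon>) * welfare m Wr a')"
    by (rule partB[OF assms])
qed

end
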